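(* Fix $s\in\mathbb{N}^+$. If $m$ is sufficiently large (depending on $s$), then for every graph $G$ and all positive integers $r_1,\dots,r_s$ the following holds for the tournament $T_G^\bigstar$: for every $i\in[s]$ there is a constant $a_i>0$ such that for all $x,y\in V(T_G^\bigstar)$, $$t_{x,y}(F_i^{\dagger\bullet\bullet},T_G^\bigstar)=\begin{cases}a_i,& \text{if } (x,y) \text{ or } (y,x) \text{ is an arc of } T_{i*k}[G] \text{ for some } k\in[r_i],\\ 0,&\text{otherwise.}\end{cases}$$ Equivalently, after deleting all-zero rows and columns, the matrix $\big(t_{x,y}(F_i^{\dagger\bullet\bullet},T_G^\bigstar)\big)_{x,y}$ equals $a_i$ times the adjacency matrix of $r_i$ disjoint copies of $G$.
   Context: All digraphs are finite and loopless; a tournament is a digraph in which every pair of distinct vertices is joined by exactly one arc. A homomorphism from a digraph $F$ to a digraph $H$ is a map $\varphi:V(F)\to V(H)$ with $(\varphi(u),\varphi(v))\in E(H)$ whenever $(u,v)\in E(F)$. For a digraph $F$ with two distinguished roots $z,w$ and vertices $x,y$ of $T$, $\hom_{x,y}(F,T)$ is the number of homomorphisms $\varphi:F\to T$ with $\varphi(z)=x,\varphi(w)=y$, and $t_{x,y}(F,T)=\hom_{x,y}(F,T)/|V(T)|^{|V(F)|-2}$. Construction of $F_i^{\bullet\bullet}$: fix $s$, a positive integer $m$, and a tournament $F_0$ on vertex set $[m]$ satisfying: (I) every vertex has out-degree and in-degree at most $2m/3$; (II) there are no disjoint $A_1,A_2\subseteq[m]$ with $|A_1|=|A_2|=\lceil\sqrt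 m\,\rceil$ such that $(a_1,a_2)$ is an arc for all $a_1\in A_1,a_2\in A_2$; (III) for every $S\subseteq[m]$ with $|S|\ge 2m/13-\sqrt m$, $F_0[S]$ contains a directed cycle. Let $k_1,\dots,k_s$ be integers in $(2m/3+2,\,5m/6)$ with $k_i>k_{i+1}+1$. $F_i^{\bullet\bullet}$ is the digraph on $[m]\cup\{z_i,w_i\}$ (roots $z_i,w_i$) whose arcs are the arcs of $F_0$, plus $z_i\to v$, $v\to w_i$ for $1\le v\le k_i$, plus $u\to z_i$, $w_i\to u$ for $k_i<u\le m$. The symmetrization $F_i^{\dagger\bullet\bullet}$ is obtained from two disjoint copies of $F_i^{\bullet\bullet}$, the "left" copy with roots $z^1,w^1$ and the "right" copy with roots $z^2,w^2$, by identifying $z^1$ with $w^2$ (root $z_i$) and $w^1$ with $z^2$ (root $w_i$). Construction of $T_G^\bigstar$: let $G$ be a graph on $[n]$ and $r_1,\dots,r_s\in\mathbb{N}^+$. For $i\in[s]$ the tournament $T_i$ is built as follows. (1) $T_0$ is the transitive tournament on $[n]$ with arcs $a\to b$ for $a<b$; $T_0[G]$ is its sub-digraph with arcs $(a,b)$, $a<b$, $ab\in E(G)$. Order the arcs of $T_0[G]$ by $(x,y)\succ(a,b)$ iff $x+y>a+b$, or $x+y=a+b$ and $x>a$. (2) For each arc $e=(a,b)$ of $T_0[G]$ attach a new copy of $F_i^{\dagger\bullet\bullet}$ with root $z_i$ identified with $a$ and root $w_i$ with $b$ (so in the left copy $\overleftarrow{F_i^e}$ the roots $z,w$ are $a,b$,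 and in the right copy $\overrightarrow{F_i^e}$ they are $b,a$). Let $V_e$ be the $2m$ non-root vertices of this copy and $V_0=\bigcup_e V_e$. (3) Add all arcs $x\to y$ with $x$ a non-root vertex of $\overleftarrow{F_i^e}$ and $y$ a non-root vertex of $\overrightarrow{F_i^e}$. (4) For each arc $e=(a,b)$ of $T_0[G]$ and each $x\in[n]\setminus\{a,b\}$, add arcs $x\to v$ for all $v\in V_e$. (5) For arcs $e_1\succ e_2$ of $T_0[G]$, add all arcs $x\to y$ with $x\in V_{e_1}$, $y\in V_{e_2}$. Then $T_G^\bigstar$ is the tournament formed by disjoint copies $T_{i*k}$ of $T_i$ for $i\in[s]$, $k\in[r_i]$, with all arcs $u\to v$ for $u\in V(T_{i_1*k_1})$, $v\in V(T_{i_2*k_2})$ whenever $i_1<i_2$, or $i_1=i_2$ and $k_1<k_2$. $T_{i*k}[G]$ denotes the copy of $T_0[G]$ in $T_{i*k}$. *)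

theory Defs
  imports Complex_Main "HOL-Library.FuncSet"
begin

type_synonym 'a digraph = "'a set \<times> ('a \<times> 'a) set"

definition hom_maps :: "'a digraph \<Rightarrow> 'b digraph \<Rightarrow> ('a \<Rightarrow> 'b) set" where
  "hom_maps F T = {\<phi> \<in> fst F \<rightarrow>\<^sub>E fst T. \<forall>(u, v) \<in> snd F. (\<phi> u, \<phi> v) \<in> snd T}"

definition hom_rooted :: "'a digraph \<Rightarrow> 'a \<Rightarrow> 'a \<Rightarrow> 'b digraph \<Rightarrow> 'b \<Rightarrow> 'b \<Rightarrow> nat" where
  "hom_rooted F z w T x y = card {\<phi> \<in> hom_maps F T. \<phi> z = x \<and> \<phi> w = y}"

definition t_rooted :: "'a digraph \<Rightarrow> 'a \<Rightarrow> 'a \<Rightarrow> 'b digraph \<Rightarrow> 'b \<Rightarrow> 'b \<Rightarrow> real" where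
  "t_rooted F z w T x y =
     real (hom_rooted F z w T x y) / real (card (fst T)) ^ (card (fst F) - 2)"

definition is_tournament :: "'a set \<Rightarrow> ('a \<times> 'a) set \<Rightarrow> bool" where
  "is_tournament V E \<longleftrightarrow> E \<subseteq> V \<times> V \<and> (\<forall>v. (v, v) \<notin> E) \<and>
     (\<forall>u\<in>V. \<forall>v\<in>V. u \<noteq> v \<longrightarrow> ((u, v) \<in> E) \<noteq> ((v, u) \<in> E))"

definition has_dicycle :: "'a set \<Rightarrow> ('a \<times> 'a) set \<Rightarrow> bool" where
  "has_dicycle S E \<longleftrightarrow> (\<exists>vs. 2 \<le> length vs \<and> distinct vs \<and> set vs \<subseteq> S \<and>
     (\<forall>j < length vs. (vs ! j, vs ! ((j + 1) mod length vs)) \<in> E))"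

definition is_F0 :: "nat \<Rightarrow> (nat \<times> nat) set \<Rightarrow> bool" where
  "is_F0 m E0 \<longleftrightarrow> is_tournament {1..m} E0
     \<and> (\<forall>v\<in>{1..m}. real (card {u. (v, u) \<in> E0}) \<le> 2 * real m / 3
                   \<and> real (card {u. (u, v) \<in> E0}) \<le> 2 * real m / 3)
     \<and> \<not> (\<exists>A1 A2. A1 \<subseteq> {1..m} \<and> A2 \<subseteq> {1..m} \<and> A1 \<inter> A2 = {}
             \<and> card A1 = nat \<lceil>sqrt (real m)\<rceil> \<and> card A2 = nat \<lceil>sqrt (real m)\<rceil>
             \<and> (\<forall>a1\<in>A1. \<forall>a2\<in>A2. (a1, a2) \<in> E0))
     \<and> (\<forall>S \<subseteq> {1..m}. real (card S) \<ge> 2 * real m / 13 - sqrt (real m)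
             \<longrightarrow> has_dicycle S (E0 \<inter> S \<times> S))"

definition valid_ks :: "nat \<Rightarrow> nat \<Rightarrow> (nat \<Rightarrow> nat) \<Rightarrow> bool" where
  "valid_ks s m k \<longleftrightarrow>
     (\<forall>i\<in>{1..s}. 2 * real m / 3 + 2 < real (k i) \<and> real (k i) < 5 * real m / 6)
     \<and> (\<forall>i. 1 \<le> i \<and> i < s \<longrightarrow> k (Suc i) + 1 < k i)"

datatype fb = BZ | BW | BV nat

definition Fbb :: "nat \<Rightarrow> (nat \<times> nat) set \<Rightarrow> nat \<Rightarrow> fb digraph" where
  "Fbb m E0 k =
    (insert BZ (insert BW (BV ` {1..m})),
     {(BV u, BV v) | u v. (u, v) \<in> E0}
     \<union> {(BZ, BV v) | v. 1 \<le> v \<and> v \<le> k} \<union> {(BV v, BW) | v. 1 \<le> v \<and> v \<le> k}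
     \<union> {(BV u, BZ) | u. k < u \<and> u \<le> m} \<union> {(BW, BV u) | u. k < u \<and> u \<le> m})"

datatype fd = FZ | FW | FL nat | FR nat

text \<open>Left copy: roots z^1 = z_i, w^1 = w_i. Right copy: z^2 = w_i, w^2 = z_i.\<close>
fun left_map :: "fb \<Rightarrow> fd" where
  "left_map BZ = FZ" | "left_map BW = FW" | "left_map (BV v) = FL v"

fun right_map :: "fb \<Rightarrow> fd" where
  "right_map BZ = FW" | "right_map BW = FZ" | "right_map (BV v) = FR v"

definition Fdag :: "nat \<Rightarrow> (nat \<times> nat) set \<Rightarrow> nat \<Rightarrow> fd digraph" where
  "Fdag m E0 k = (let B = Fbb m E0 k in
     (left_map ` fst B \<union> right_map ` fst B,
      map_prod left_map left_map ` snd B \<union> map_prod right_map right_map ` snd B))"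

definition is_graph :: "nat \<Rightarrow> nat set set \<Rightarrow> bool" where
  "is_graph n GE \<longleftrightarrow> (\<forall>e\<in>GE. e \<subseteq> {1..n} \<and> card e = 2)"

definition arcsG :: "nat \<Rightarrow> nat set set \<Rightarrow> (nat \<times> nat) set" where
  "arcsG n GE = {(a, b). 1 \<le> a \<and> a < b \<and> b \<le> n \<and> {a, b} \<in> GE}"

definition arc_succ :: "nat \<times> nat \<Rightarrow> nat \<times> nat \<Rightarrow> bool" where
  "arc_succ e1 e2 \<longleftrightarrow> fst e1 + snd e1 > fst e2 + snd e2
     \<or> (fst e1 + snd e1 = fst e2 + snd e2 \<and> fst e1 > fst e2)"

text \<open>Vertices of T_i: roots Rt a (a in [n]); for each arc e of T_0[G], the non-root
  vertices NL e v (left copy) and NR e v (right copy), v in [m].\<close>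
datatype tv = Rt nat | NL "nat \<times> nat" nat | NR "nat \<times> nat" nat

fun embed :: "nat \<times> nat \<Rightarrow> fd \<Rightarrow> tv" where
  "embed e FZ = Rt (fst e)" | "embed e FW = Rt (snd e)"
| "embed e (FL v) = NL e v" | "embed e (FR v) = NR e v"

definition nonroot :: "nat \<Rightarrow> nat \<times> nat \<Rightarrow> tv set" where
  "nonroot m e = NL e ` {1..m} \<union> NR e ` {1..m}"

definition Ti_V :: "nat \<Rightarrow> nat set set \<Rightarrow> nat \<Rightarrow> tv set" where
  "Ti_V n GE m = Rt ` {1..n} \<union> (\<Union>e\<in>arcsG n GE. nonroot m e)"

definition Ti_E :: "nat \<Rightarrow> nat set set \<Rightarrow> nat \<Rightarrow> (nat \<times> nat) set \<Rightarrow> nat \<Rightarrow> (tv \<times> tv) set" where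
  "Ti_E n GE m E0 k =
     {(Rt a, Rt b) | a b. 1 \<le> a \<and> a < b \<and> b \<le> n}
     \<union> (\<Union>e\<in>arcsG n GE. map_prod (embed e) (embed e) ` snd (Fdag m E0 k))
     \<union> (\<Union>e\<in>arcsG n GE. {(NL e u, NR e v) | u v. u \<in> {1..m} \<and> v \<in> {1..m}})
     \<union> (\<Union>e\<in>arcsG n GE. {(Rt x, y) | x y. x \<in> {1..n} \<and> x \<noteq> fst e \<and> x \<noteq> snd e
                                           \<and> y \<in> nonroot m e})
     \<union> {(u, v) | e1 e2 u v. e1 \<in> arcsG n GE \<and> e2 \<in> arcsG n GE \<and> arc_succ e1 e2
                           \<and> u \<in> nonroot m e1 \<and> v \<in> nonroot m e2}"

text \<open>T_G^star: vertex (i, j, v) is vertex v of the copy T_{i*j} of T_i.\<close>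
definition Tstar :: "nat \<Rightarrow> (nat \<Rightarrow> nat) \<Rightarrow> nat \<Rightarrow> nat set set \<Rightarrow> nat \<Rightarrow> (nat \<times> nat) set
    \<Rightarrow> (nat \<Rightarrow> nat) \<Rightarrow> (nat \<times> nat \<times> tv) digraph" where
  "Tstar s r n GE m E0 k =
    (let V = {(i, j, v). i \<in> {1..s} \<and> j \<in> {1..r i} \<and> v \<in> Ti_V n GE m} in
     (V,
      {((i, j, u), (i, j, v)) | i j u v. i \<in> {1..s} \<and> j \<in> {1..r i}
                                         \<and> (u, v) \<in> Ti_E n GE m E0 (k i)}
      \<union> {(p, q). p \<in> V \<and> q \<in> V \<and>
            (fst p < fst q \<or> (fst p = fst q \<and> fst (snd p) < fst (snd q)))}))"

end

theory Submission
  imports Defs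
begin

fun tarc :: "nat \<Rightarrow> nat set set \<Rightarrow> nat \<Rightarrow> (nat \<times> nat) set \<Rightarrow> nat \<Rightarrow> tv \<Rightarrow> tv \<Rightarrow> bool" where
  "tarc n GE m E0 K (Rt a) (Rt b) = (1 \<le> a \<and> a < b \<and> b \<le> n)"
| "tarc n GE m E0 K (Rt c) (NL e v) = (e \<in> arcsG n GE \<and> v \<in> {1..m} \<and> c \<in> {1..n} \<and> (c = fst e \<longrightarrow> v \<le> K) \<and> (c = snd e \<longrightarrow> K < v))"
| "tarc n GE m E0 K (NL e v) (Rt c) = (e \<in> arcsG n GE \<and> v \<in> {1..m} \<and> ((c = fst e \<and> K < v) \<or> (c = snd e \<and> v \<le> K)))"
| "tarc n GE m E0 K (Rt c) (NR e v) = (e \<in> arcsG n GE \<and> v \<in> {1..m} \<and> c \<in> {1..n} \<and> (c = fst e \<longrightarrow> K < v) \<and> (c = snd e \<longrightarrow> v \<le> K))"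
| "tarc n GE m E0 K (NR e v) (Rt c) = (e \<in> arcsG n GE \<and> v \<in> {1..m} \<and> ((c = fst e \<and> v \<le> K) \<or> (c = snd e \<and> K < v)))"
| "tarc n GE m E0 K (NL e u) (NL e' v) = (e \<in> arcsG n GE \<and> e' \<in> arcsG n GE \<and> u \<in> {1..m} \<and> v \<in> {1..m} \<and> (if e = e' then (u, v) \<in> E0 else arc_succ e e'))"
| "tarc n GE m E0 K (NR e u) (NR e' v) = (e \<in> arcsG n GE \<and> e' \<in> arcsG n GE \<and> u \<in> {1..m} \<and> v \<in> {1..m} \<and> (if e = e' then (u, v) \<in> E0 else arc_succ e e'))"
| "tarc n GE m E0 K (NL e u) (NR e' v) = (e \<in> arcsG n GE \<and> e' \<in> arcsG n GE \<and> u \<in> {1..m} \<and> v \<in> {1..m} \<and> (e = e' \<or> arc_succ e e'))"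
| "tarc n GE m E0 K (NR e u) (NL e' v) = (e \<in> arcsG n GE \<and> e' \<in> arcsG n GE \<and> u \<in> {1..m} \<and> v \<in> {1..m} \<and> arc_succ e e')"

lemma arcsG_D: "e \<in> arcsG n GE \<Longrightarrow> 1 \<le> fst e \<and> fst e < snd e \<and> snd e \<le> n"
  by (auto simp: arcsG_def)


fun dfa :: "nat \<Rightarrow> (nat \<times> nat) set \<Rightarrow> nat \<Rightarrow> fd \<Rightarrow> fd \<Rightarrow> bool" where
  "dfa m E0 k FZ (FL v) = (1 \<le> v \<and> v \<le> k)"
| "dfa m E0 k (FL v) FW = (1 \<le> v \<and> v \<le> k)"
| "dfa m E0 k (FL u) FZ = (k < u \<and> u \<le> m)"
| "dfa m E0 k FW (FL u) = (k < u \<and> u \<le> m)"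
| "dfa m E0 k FW (FR v) = (1 \<le> v \<and> v \<le> k)"
| "dfa m E0 k (FR v) FZ = (1 \<le> v \<and> v \<le> k)"
| "dfa m E0 k (FR u) FW = (k < u \<and> u \<le> m)"
| "dfa m E0 k FZ (FR u) = (k < u \<and> u \<le> m)"
| "dfa m E0 k (FL u) (FL v) = ((u, v) \<in> E0)"
| "dfa m E0 k (FR u) (FR v) = ((u, v) \<in> E0)"
| "dfa m E0 k _ _ = False"

lemma left_map_eq: "left_map b = FZ \<longleftrightarrow> b = BZ" "left_map b = FW \<longleftrightarrow> b = BW"
   "left_map b = FL v \<longleftrightarrow> b = BV v" "left_map b \<noteq> FR v"
  by (cases b; simp)+
lemma left_map_eq2: "FZ = left_map b \<longleftrightarrow> b = BZ" "FW = left_map b \<longleftrightarrow> b = BW"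
   "FL v = left_map b \<longleftrightarrow> b = BV v" "FR v \<noteq> left_map b"
  by (cases b; auto)+
lemma right_map_eq2: "FW = right_map b \<longleftrightarrow> b = BZ" "FZ = right_map b \<longleftrightarrow> b = BW"
   "FR v = right_map b \<longleftrightarrow> b = BV v" "FL v \<noteq> right_map b"
  by (cases b; auto)+
lemma right_map_eq: "right_map b = FW \<longleftrightarrow> b = BZ" "right_map b = FZ \<longleftrightarrow> b = BW"
   "right_map b = FR v \<longleftrightarrow> b = BV v" "right_map b \<noteq> FL v"
  by (cases b; simp)+

lemma mem_map_prod_image: "(a, b) \<in> map_prod f g ` S \<longleftrightarrow> (\<exists>a' b'. (a', b') \<in> S \<and> a = f a' \<and> b = g b')"
  by force

lemma Fbb_arc: "(a, b) \<in> snd (Fbb m E0 k) \<longleftrightarrow>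
   (\<exists>u v. a = BV u \<and> b = BV v \<and> (u, v) \<in> E0) \<or> (\<exists>v. a = BZ \<and> b = BV v \<and> 1 \<le> v \<and> v \<le> k)
   \<or> (\<exists>v. a = BV v \<and> b = BW \<and> 1 \<le> v \<and> v \<le> k) \<or> (\<exists>u. a = BV u \<and> b = BZ \<and> k < u \<and> u \<le> m)
   \<or> (\<exists>u. a = BW \<and> b = BV u \<and> k < u \<and> u \<le> m)"
  by (auto simp: Fbb_def)

lemma Fdag_arc: "(a, b) \<in> snd (Fdag m E0 k) \<longleftrightarrow> dfa m E0 k a b"
proof -
  have "(a, b) \<in> snd (Fdag m E0 k) \<longleftrightarrow>
     (\<exists>a' b'. (a', b') \<in> snd (Fbb m E0 k) \<and> a = left_map a' \<and> b = left_map b') \<or>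
     (\<exists>a' b'. (a', b') \<in> snd (Fbb m E0 k) \<and> a = right_map a' \<and> b = right_map b')"
    by (simp add: Fdag_def Let_def mem_map_prod_image)
  also have "\<dots> \<longleftrightarrow> dfa m E0 k a b"
    unfolding Fbb_arc
    by (cases a; cases b) (simp_all add: left_map_eq2 right_map_eq2)
  finally show ?thesis .
qed

lemma embed_eq: "embed e a = Rt c \<longleftrightarrow> (a = FZ \<and> c = fst e) \<or> (a = FW \<and> c = snd e)"
  "embed e a = NL e' v \<longleftrightarrow> a = FL v \<and> e' = e"  "embed e a = NR e' v \<longleftrightarrow> a = FR v \<and> e' = e"
  by (cases a; auto)+

lemma embed_eq2: "Rt c = embed e a \<longleftrightarrow> (a = FZ \<and> c = fst e) \<or> (a = FW \<and> c = snd e)"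
  "NL e' v = embed e a \<longleftrightarrow> a = FL v \<and> e' = e"  "NR e' v = embed e a \<longleftrightarrow> a = FR v \<and> e' = e"
  by (cases a; auto)+

lemma tv_img[simp]: "NL x y \<in> NL e ` S \<longleftrightarrow> x = e \<and> y \<in> S" "NR x y \<in> NR e ` S \<longleftrightarrow> x = e \<and> y \<in> S"
  "NL x y \<notin> NR e ` S" "NR x y \<notin> NL e ` S" "Rt c \<notin> NL e ` S" "Rt c \<notin> NR e ` S"
  "Rt c \<in> Rt ` A \<longleftrightarrow> c \<in> A" "NL x y \<notin> Rt ` A" "NR x y \<notin> Rt ` A"
  by auto

lemma Ti_E_iff:
  assumes "E0 \<subseteq> {1..m} \<times> {1..m}" "K \<le> m"
  shows "(u, v) \<in> Ti_E n GE m E0 K \<longleftrightarrow> tarc n GE m E0 K u v"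
proof -
  note ex_disj_distrib[simp] conj_disj_distribL[simp] conj_disj_distribR[simp]
  have emb: "(u, v) \<in> map_prod (embed e) (embed e) ` snd (Fdag m E0 K) \<longleftrightarrow>
     (\<exists>a b. dfa m E0 K a b \<and> u = embed e a \<and> v = embed e b)" for e u v
    by (simp add: Fdag_arc mem_map_prod_image)
  show ?thesis
  using assms
  apply (cases u; cases v)
  apply (simp_all add: Ti_E_def emb embed_eq2 nonroot_def)
  apply (auto simp: arc_succ_def arcsG_def)
  done
qed


section \<open>Facts about F0\<close>

locale f0 =
  fixes m :: nat and E0 :: "(nat \<times> nat) set"
  assumes F0: "is_F0 m E0" and mbig: "400 \<le> m"
begin

definition c :: nat where "c = nat \<lceil>sqrt (real m)\<rceil>"

lemma c_bound: "20 * c \<le> m + 20" "1 \<le> c"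
proof -
  have s20: "sqrt (real m) \<ge> 20"
    using mbig real_sqrt_le_mono[of 400 "real m"] by simp
  have "real m = sqrt (real m) * sqrt (real m)" by simp
  hence sm: "20 * sqrt (real m) \<le> real m" using s20
    by (metis mult_right_mono real_sqrt_ge_zero of_nat_0_le_iff)
  have "real c = of_int \<lceil>sqrt (real m)\<rceil>" unfolding c_def
    by (simp add: ceiling_le_zero)
  also have "\<dots> \<le> sqrt (real m) + 1" by linarith
  finally have "real c \<le> sqrt (real m) + 1" .
  hence "real (20 * c) \<le> real (m + 20)" using sm by simp
  thus "20 * c \<le> m + 20" by linarith
  have "real c \<ge> sqrt (real m)" unfolding c_def by linarith
  thus "1 \<le> c" using s20 by linarith
qed

lemma c_small: "12 * c + 12 \<le> m" using c_bound mbig by linarith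

lemma tour: "is_tournament {1..m} E0" using F0 by (simp add: is_F0_def)

lemma E0_sub: "(u, v) \<in> E0 \<Longrightarrow> u \<in> {1..m} \<and> v \<in> {1..m}"
  using tour by (auto simp: is_tournament_def)

lemma E0_subset: "E0 \<subseteq> {1..m} \<times> {1..m}" using E0_sub by auto

lemma E0_irrefl: "(u, u) \<notin> E0" using tour by (auto simp: is_tournament_def)

lemma E0_asym: "(u, v) \<in> E0 \<Longrightarrow> (v, u) \<notin> E0"
  using tour E0_sub unfolding is_tournament_def by (metis E0_irrefl)

lemma E0_total: "u \<in> {1..m} \<Longrightarrow> v \<in> {1..m} \<Longrightarrow> u \<noteq> v \<Longrightarrow> (u, v) \<in> E0 \<or> (v, u) \<in> E0"
  using tour unfolding is_tournament_def by blast

lemma outdeg: assumes "\<forall>w\<in>Y. (u, w) \<in> E0" shows "real (card Y) \<le> 2 * real m / 3"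
proof (cases "Y = {}")
  case False
  have Y: "Y \<subseteq> {w. (u, w) \<in> E0}" using assms by auto
  have fin: "finite {w. (u, w) \<in> E0}"
    by (rule finite_subset[of _ "{1..m}"]) (auto dest: E0_sub)
  have u: "u \<in> {1..m}" using False assms E0_sub by auto
  have "card Y \<le> card {w. (u, w) \<in> E0}" by (rule card_mono[OF fin Y])
  moreover have "real (card {w. (u, w) \<in> E0}) \<le> 2 * real m / 3"
    using F0 u unfolding is_F0_def by blast
  ultimately show ?thesis by linarith
qed simp

lemma indeg: assumes "\<forall>w\<in>Y. (w, u) \<in> E0" shows "real (card Y) \<le> 2 * real m / 3"
proof (cases "Y = {}")
  case False
  have Y: "Y \<subseteq> {w. (w, u) \<in> E0}" using assms by auto
  have fin: "finite {w. (w, u) \<in> E0}"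
    by (rule finite_subset[of _ "{1..m}"]) (auto dest: E0_sub)
  have u: "u \<in> {1..m}" using False assms E0_sub by auto
  have "card Y \<le> card {w. (w, u) \<in> E0}" by (rule card_mono[OF fin Y])
  moreover have "real (card {w. (w, u) \<in> E0}) \<le> 2 * real m / 3"
    using F0 u unfolding is_F0_def by blast
  ultimately show ?thesis by linarith
qed simp

lemma cut:
  assumes "X \<subseteq> {1..m}" "Y \<subseteq> {1..m}" "X \<inter> Y = {}" "\<forall>x\<in>X. \<forall>y\<in>Y. (x, y) \<in> E0"
  shows "card X < c \<or> card Y < c"
proof (rule ccontr)
  assume "\<not> ?thesis"
  hence "c \<le> card X" "c \<le> card Y" by auto
  then obtain A1 A2 where A1: "A1 \<subseteq> X" "card A1 = c" and A2: "A2 \<subseteq> Y" "card A2 = c"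
    by (meson obtain_subset_with_card_n)
  have "\<exists>A1 A2. A1 \<subseteq> {1..m} \<and> A2 \<subseteq> {1..m} \<and> A1 \<inter> A2 = {}
             \<and> card A1 = nat \<lceil>sqrt (real m)\<rceil> \<and> card A2 = nat \<lceil>sqrt (real m)\<rceil>
             \<and> (\<forall>a1\<in>A1. \<forall>a2\<in>A2. (a1, a2) \<in> E0)"
    apply (rule exI[of _ A1], rule exI[of _ A2])
    using A1 A2 assms unfolding c_def by blast
  thus False using F0 unfolding is_F0_def by blast
qed

lemma cut2:
  assumes "X \<subseteq> {1..m}" "Y \<subseteq> {1..m}" "X \<inter> Y = {}" "\<forall>x\<in>X. \<forall>y\<in>Y. (x, y) \<in> E0"
    and "m \<le> card X + card Y + 2"
  shows "X = {} \<or> Y = {}"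
proof (rule ccontr)
  assume ne: "\<not> ?thesis"
  have fX: "finite X" "finite Y" using assms finite_subset by blast+
  from cut[OF assms(1-4)] show False
  proof
    assume X: "card X < c"
    obtain x where "x \<in> X" using ne by auto
    hence "real (card Y) \<le> 2 * real m / 3" using assms(4) outdeg by blast
    thus False using X assms(5) c_small by linarith
  next
    assume Y: "card Y < c"
    obtain y where "y \<in> Y" using ne by auto
    hence "real (card X) \<le> 2 * real m / 3" using assms(4) indeg by blast
    thus False using Y assms(5) c_small by linarith
  qed
qed

end


lemma threshold:
  fixes h :: "'a \<Rightarrow> nat"
  assumes "finite Z" "c \<le> card Z" "0 < c"
  shows "\<exists>t. c \<le> card {z\<in>Z. t \<le> h z} \<and> card {z\<in>Z. t < h z} < c"
proof -
  have Zne: "Z \<noteq> {}" using assms by auto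
  define S where "S = {t. t \<le> Max (h ` Z) \<and> c \<le> card {z\<in>Z. t \<le> h z}}"
  have "0 \<in> S" using assms by (simp add: S_def)
  have fS: "finite S" unfolding S_def by simp
  define t0 where "t0 = Max S"
  have t0S: "t0 \<in> S" unfolding t0_def using fS \<open>0 \<in> S\<close> Max_in by blast
  show ?thesis
  proof (rule exI[of _ t0], intro conjI)
    show "c \<le> card {z\<in>Z. t0 \<le> h z}" using t0S by (simp add: S_def)
    show "card {z\<in>Z. t0 < h z} < c"
    proof (rule ccontr)
      assume "\<not> ?thesis"
      hence cc: "c \<le> card {z\<in>Z. t0 < h z}" by simp
      hence "{z\<in>Z. t0 < h z} \<noteq> {}" by (metis assms(3) card.empty leD)
      then obtain z where z: "z \<in> Z" "t0 < h z" by auto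
      have "h z \<le> Max (h ` Z)" using z assms(1) by simp
      moreover have "{z\<in>Z. Suc t0 \<le> h z} = {z\<in>Z. t0 < h z}" by auto
      ultimately have "Suc t0 \<in> S" using z cc unfolding S_def by simp
      hence "Suc t0 \<le> t0" unfolding t0_def using fS by simp
      thus False by simp
    qed
  qed
qed

lemma arc_succ_irrefl: "\<not> arc_succ e e" by (simp add: arc_succ_def)
lemma arc_succ_asym: "arc_succ e e' \<Longrightarrow> \<not> arc_succ e' e" by (auto simp: arc_succ_def)
lemma arc_succ_total: "e \<noteq> e' \<Longrightarrow> arc_succ e e' \<or> arc_succ e' e"
  by (cases e; cases e') (auto simp: arc_succ_def)

definition rk :: "nat \<Rightarrow> nat \<times> nat \<Rightarrow> nat" where "rk n e = (fst e + snd e) * (n + 1) + fst e"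

lemma rk_less: assumes "fst e1 \<le> n" "fst e2 \<le> n" "rk n e1 < rk n e2" shows "arc_succ e2 e1"
proof -
  obtain a1 b1 a2 b2 where e: "e1 = (a1, b1)" "e2 = (a2, b2)" by fastforce
  have A: "(a1 + b1) * (n + 1) + a1 < (a2 + b2) * (n + 1) + a2" using assms(3) e by (simp add: rk_def)
  have "\<not> a2 + b2 < a1 + b1"
  proof
    assume "a2 + b2 < a1 + b1"
    hence "a2 + b2 + 1 \<le> a1 + b1" by simp
    hence "(a2 + b2 + 1) * (n + 1) \<le> (a1 + b1) * (n + 1)" by (rule mult_right_mono) simp
    thus False using A assms(2) e by (simp add: algebra_simps)
  qed
  moreover have "a1 + b1 = a2 + b2 \<Longrightarrow> a1 < a2" using A by simp
  ultimately show ?thesis using e by (auto simp: arc_succ_def)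
qed

lemma rk_mono: assumes "fst e1 \<le> n" "arc_succ e2 e1" shows "rk n e1 < rk n e2"
proof -
  obtain a1 b1 a2 b2 where e: "e1 = (a1, b1)" "e2 = (a2, b2)" by fastforce
  show ?thesis
  proof (cases "a1 + b1 < a2 + b2")
    case True
    hence "(a1 + b1 + 1) * (n + 1) \<le> (a2 + b2) * (n + 1)" by (intro mult_right_mono) auto
    thus ?thesis using e assms(1) by (simp add: rk_def algebra_simps)
  next
    case False
    thus ?thesis using e assms by (auto simp: rk_def arc_succ_def)
  qed
qed

lemma rk_eq: assumes "fst e1 \<le> n" "fst e2 \<le> n" "rk n e1 = rk n e2" shows "e1 = e2"
proof (rule ccontr)
  assume "e1 \<noteq> e2"
  hence "arc_succ e1 e2 \<or> arc_succ e2 e1" by (rule arc_succ_total)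
  moreover have "\<not> rk n e1 < rk n e2" "\<not> rk n e2 < rk n e1" using assms by auto
  ultimately show False using rk_mono assms by blast
qed


lemma TiV_simps[simp]:
  "Rt c \<in> Ti_V n GE m \<longleftrightarrow> c \<in> {1..n}"
  "NL e w \<in> Ti_V n GE m \<longleftrightarrow> e \<in> arcsG n GE \<and> w \<in> {1..m}"
  "NR e w \<in> Ti_V n GE m \<longleftrightarrow> e \<in> arcsG n GE \<and> w \<in> {1..m}"
  by (auto simp: Ti_V_def nonroot_def)

lemma nonroot_simps[simp]:
  "Rt c \<notin> nonroot m e"
  "NL e' w \<in> nonroot m e \<longleftrightarrow> e' = e \<and> w \<in> {1..m}"
  "NR e' w \<in> nonroot m e \<longleftrightarrow> e' = e \<and> w \<in> {1..m}"
  by (auto simp: nonroot_def)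

lemma tarc_V: "tarc n GE m E0 K u v \<Longrightarrow> u \<in> Ti_V n GE m \<and> v \<in> Ti_V n GE m"
  by (cases u; cases v) (auto dest: arcsG_D)

context f0
begin

lemma tarc_asym: "tarc n GE m E0 K u v \<Longrightarrow> \<not> tarc n GE m E0 K v u"
  by (cases u; cases v) (auto simp: E0_asym arc_succ_asym arc_succ_irrefl dest: arcsG_D split: if_splits)

lemma tarc_irrefl: "\<not> tarc n GE m E0 K u u"
  by (cases u) (auto simp: E0_irrefl arc_succ_irrefl)

end


fun isRt :: "tv \<Rightarrow> bool" where "isRt (Rt _) = True" | "isRt _ = False"
fun rix :: "tv \<Rightarrow> nat" where "rix (Rt c) = c" | "rix _ = 0"
fun gad :: "tv \<Rightarrow> nat \<times> nat" where
  "gad (NL e _) = e" | "gad (NR e _) = e" | "gad (Rt _) = (0, 0)"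

lemma isRt_eq: "isRt x \<Longrightarrow> x = Rt (rix x)" by (cases x) auto

lemma nonroot_gad: "x \<in> Ti_V n GE m \<Longrightarrow> \<not> isRt x \<Longrightarrow> x \<in> nonroot m (gad x) \<and> gad x \<in> arcsG n GE"
  by (cases x) auto

lemma nonroot_arc: "a \<in> Ti_V n GE m \<Longrightarrow> b \<in> Ti_V n GE m \<Longrightarrow> \<not> isRt a \<Longrightarrow> \<not> isRt b \<Longrightarrow>
   arc_succ (gad a) (gad b) \<Longrightarrow> tarc n GE m E0 K a b"
  by (cases a; cases b) (auto simp: arc_succ_irrefl)

lemma nonroot_unique: "x \<in> nonroot m e \<Longrightarrow> x \<in> nonroot m e' \<Longrightarrow> e = e'"
  by (cases x) auto

lemma root_nonroot_arc: "c \<in> {1..n} \<Longrightarrow> c \<noteq> fst e \<Longrightarrow> c \<noteq> snd e \<Longrightarrow> b \<in> nonroot m e \<Longrightarrow> e \<in> arcsG n GE \<Longrightarrow>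
   tarc n GE m E0 K (Rt c) b"
  by (cases b) auto

context f0
begin

lemma two_le_m: "2 \<le> m" using mbig by simp

lemma copy_lemma:
  fixes f :: "nat \<Rightarrow> tv"
  assumes hf: "\<And>u v. (u, v) \<in> E0 \<Longrightarrow> tarc n GE m E0 K (f u) (f v)"
  shows "\<exists>e\<in>arcsG n GE. \<forall>v\<in>{1..m}. f v \<in> nonroot m e \<union> {Rt (fst e), Rt (snd e)}"
proof -
  let ?A = "tarc n GE m E0 K"
  have hinv: "(u, v) \<in> E0" if "u \<in> {1..m}" "v \<in> {1..m}" "?A (f u) (f v)" for u v
  proof -
    have "u \<noteq> v" using that tarc_irrefl by metis
    thus ?thesis using E0_total[OF that(1,2)] hf tarc_asym that(3) by blast
  qed
  have fV: "f v \<in> Ti_V n GE m" if "v \<in> {1..m}" for v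
  proof -
    define w where "w = (if v = 1 then 2 else 1::nat)"
    have "w \<in> {1..m}" "w \<noteq> v" using two_le_m by (auto simp: w_def)
    thus ?thesis using E0_total[OF that] hf tarc_V by blast
  qed
  have finj: "inj_on f {1..m}"
  proof (rule inj_onI)
    fix u v assume uv: "u \<in> {1..m}" "v \<in> {1..m}" "f u = f v"
    show "u = v"
    proof (rule ccontr)
      assume "u \<noteq> v"
      thus False using E0_total[OF uv(1,2)] hf tarc_irrefl uv(3) by metis
    qed
  qed
  define R0 where "R0 = {v\<in>{1..m}. isRt (f v)}"
  define Z where "Z = {v\<in>{1..m}. \<not> isRt (f v)}"
  have finR0: "finite R0" and finZ: "finite Z" by (auto simp: R0_def Z_def)
  have cardRZ: "card R0 + card Z = m"
  proof -
    have "R0 \<union> Z = {1..m}" "R0 \<inter> Z = {}" by (auto simp: R0_def Z_def)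
    thus ?thesis using card_Un_disjoint[OF finR0 finZ] by simp
  qed
  have c0: "0 < c" using c_bound by simp
  have R0small: "card R0 < 2 * c"
  proof (rule ccontr)
    assume "\<not> ?thesis"
    hence big: "2 * c \<le> card R0" by simp
    obtain t where t: "c \<le> card {z\<in>R0. t \<le> rix (f z)}" "card {z\<in>R0. t < rix (f z)} < c"
      using threshold[OF finR0 _ c0, of "\<lambda>z. rix (f z)"] big by auto
    define Y where "Y = {z\<in>R0. t \<le> rix (f z)}"
    define X where "X = {z\<in>R0. rix (f z) < t}"
    have eq1: "card {z\<in>R0. rix (f z) = t} \<le> 1"
    proof -
      have "\<forall>a\<in>{z\<in>R0. rix (f z) = t}. \<forall>b\<in>{z\<in>R0. rix (f z) = t}. a = b"
      proof (intro ballI)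
        fix a b assume ab: "a \<in> {z\<in>R0. rix (f z) = t}" "b \<in> {z\<in>R0. rix (f z) = t}"
        hence "f a = f b" using isRt_eq unfolding R0_def by (metis (mono_tags, lifting) mem_Collect_eq)
        thus "a = b" using ab finj unfolding R0_def by (auto dest: inj_onD)
      qed
      thus ?thesis using finR0 by (simp add: card_le_Suc0_iff_eq)
    qed
    have "Y = {z\<in>R0. t < rix (f z)} \<union> {z\<in>R0. rix (f z) = t}" unfolding Y_def by auto
    hence "card Y \<le> card {z\<in>R0. t < rix (f z)} + card {z\<in>R0. rix (f z) = t}"
      by (simp add: card_Un_le)
    hence cY: "card Y \<le> c" using t eq1 by simp
    have "X \<union> Y = R0" "X \<inter> Y = {}" unfolding X_def Y_def by auto
    hence "card X + card Y = card R0" using card_Un_disjoint finR0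
      by (metis finite_Un)
    hence cX: "c \<le> card X" using big cY by simp
    have "\<forall>x\<in>X. \<forall>y\<in>Y. (x, y) \<in> E0"
    proof (intro ballI)
      fix x y assume xy: "x \<in> X" "y \<in> Y"
      hence xm: "x \<in> {1..m}" "y \<in> {1..m}" and rt: "isRt (f x)" "isRt (f y)" and lt: "rix (f x) < rix (f y)"
        unfolding X_def Y_def R0_def by auto
      have "f x = Rt (rix (f x))" "f y = Rt (rix (f y))" using rt isRt_eq by auto
      moreover have "rix (f x) \<in> {1..n}" "rix (f y) \<in> {1..n}" using fV[OF xm(1)] fV[OF xm(2)] calculation
        by (metis TiV_simps(1))+
      ultimately have "?A (f x) (f y)" using lt by (metis tarc.simps(1) atLeastAtMost_iff)
      thus "(x, y) \<in> E0" using hinv xm by blast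
    qed
    moreover have "X \<subseteq> {1..m}" "Y \<subseteq> {1..m}" "X \<inter> Y = {}" unfolding X_def Y_def R0_def by auto
    ultimately have "card X < c \<or> card Y < c" using cut by blast
    thus False using cX t(1) Y_def by simp
  qed
  \<comment> \<open>Step b: one dominant gadget\<close>
  let ?h = "\<lambda>z. rk n (gad (f z))"
  have Zbig: "c \<le> card Z" using R0small cardRZ c_small by linarith
  obtain t where t: "c \<le> card {z\<in>Z. t \<le> ?h z}" "card {z\<in>Z. t < ?h z} < c"
    using threshold[OF finZ Zbig c0, of ?h] by auto
  define Y where "Y = {z\<in>Z. t \<le> ?h z}"
  define Yp where "Yp = {z\<in>Z. t < ?h z}"
  define X where "X = {z\<in>Z. ?h z < t}"
  define W where "W = {z\<in>Z. ?h z = t}"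
  have Zg: "f z \<in> nonroot m (gad (f z)) \<and> gad (f z) \<in> arcsG n GE" if "z \<in> Z" for z
    using that nonroot_gad fV unfolding Z_def by blast
  have "\<forall>y\<in>Y. \<forall>x\<in>X. (y, x) \<in> E0"
  proof (intro ballI)
    fix x y assume xy: "y \<in> Y" "x \<in> X"
    hence xm: "x \<in> {1..m}" "y \<in> {1..m}" and nr: "\<not> isRt (f x)" "\<not> isRt (f y)"
      and lt: "?h x < ?h y" unfolding X_def Y_def Z_def by auto
    have "gad (f x) \<in> arcsG n GE" "gad (f y) \<in> arcsG n GE" using Zg xy unfolding X_def Y_def by auto
    hence "fst (gad (f x)) \<le> n" "fst (gad (f y)) \<le> n" using arcsG_D by fastforce+
    hence "arc_succ (gad (f y)) (gad (f x))" using rk_less lt by blast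
    hence "?A (f y) (f x)" using nonroot_arc fV xm nr by blast
    thus "(y, x) \<in> E0" using hinv xm by blast
  qed
  moreover have "X \<subseteq> {1..m}" "Y \<subseteq> {1..m}" "Y \<inter> X = {}" unfolding X_def Y_def Z_def by auto
  ultimately have "card Y < c \<or> card X < c" using cut by blast
  hence cX: "card X < c" using t(1) Y_def by simp
  have "Z = X \<union> Yp \<union> W" "X \<inter> Yp = {}" "(X \<union> Yp) \<inter> W = {}"
    unfolding X_def Yp_def W_def by auto
  hence "card Z = card X + card Yp + card W"
    using finZ by (metis card_Un_disjoint finite_Un)
  hence cW: "m + 3 \<le> card W + 4 * c" using cX t(2) cardRZ R0small unfolding Yp_def by linarith
  hence Wne: "W \<noteq> {}" using c_small by auto
  then obtain w0 where w0: "w0 \<in> W" by auto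
  define e0 where "e0 = gad (f w0)"
  have e0G: "e0 \<in> arcsG n GE" using Zg w0 unfolding e0_def W_def by auto
  have Wg: "f w \<in> nonroot m e0" if "w \<in> W" for w
  proof -
    have "w \<in> Z" "w0 \<in> Z" using that w0 unfolding W_def by auto
    hence "fst (gad (f w)) \<le> n" "fst e0 \<le> n" using Zg arcsG_D e0G by fastforce+
    moreover have "rk n (gad (f w)) = rk n e0" using that w0 unfolding W_def e0_def by simp
    ultimately have "gad (f w) = e0" using rk_eq by blast
    thus ?thesis using Zg \<open>w \<in> Z\<close> by metis
  qed
  have Wm: "W \<subseteq> {1..m}" unfolding W_def Z_def by auto
  have Wbig: "\<not> real (card W) \<le> 2 * real m / 3" using cW c_small by linarith
  have "\<forall>v\<in>{1..m}. f v \<in> nonroot m e0 \<union> {Rt (fst e0), Rt (snd e0)}"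
  proof (rule ballI, rule ccontr)
    fix v assume vm: "v \<in> {1..m}" and nv: "f v \<notin> nonroot m e0 \<union> {Rt (fst e0), Rt (snd e0)}"
    show False
    proof (cases "isRt (f v)")
      case True
      hence fv: "f v = Rt (rix (f v))" by (rule isRt_eq)
      hence "rix (f v) \<in> {1..n}" using fV[OF vm] by (metis TiV_simps(1))
      moreover have "rix (f v) \<noteq> fst e0" "rix (f v) \<noteq> snd e0" using nv fv by auto
      ultimately have "\<forall>w\<in>W. ?A (f v) (f w)" using root_nonroot_arc Wg e0G fv by metis
      hence "\<forall>w\<in>W. (v, w) \<in> E0" using hinv vm Wm by blast
      thus False using outdeg Wbig by blast
    next
      case False
      have vZ: "v \<in> Z" using vm False unfolding Z_def by auto
      have ne: "gad (f v) \<noteq> e0" using Zg[OF vZ] nv by auto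
      from arc_succ_total[OF ne] show False
      proof
        assume as: "arc_succ (gad (f v)) e0"
        have "\<forall>w\<in>W. ?A (f v) (f w)"
        proof
          fix w assume w: "w \<in> W"
          hence wZ: "w \<in> Z" unfolding W_def by simp
          have "gad (f w) = e0" using Wg[OF w] Zg[OF wZ] nonroot_unique by metis
          moreover have "w \<in> {1..m}" "\<not> isRt (f w)" using wZ unfolding Z_def by auto
          ultimately show "?A (f v) (f w)" using nonroot_arc[OF fV[OF vm] fV, of w] as False by simp
        qed
        hence "\<forall>w\<in>W. (v, w) \<in> E0" using hinv vm Wm by blast
        thus False using outdeg Wbig by blast
      next
        assume as: "arc_succ e0 (gad (f v))"
        have "\<forall>w\<in>W. ?A (f w) (f v)"
        proof
          fix w assume w: "w \<in> W"
          hence wZ: "w \<in> Z" unfolding W_def by simp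
          have "gad (f w) = e0" using Wg[OF w] Zg[OF wZ] nonroot_unique by metis
          moreover have "w \<in> {1..m}" "\<not> isRt (f w)" using wZ unfolding Z_def by auto
          ultimately show "?A (f w) (f v)" using nonroot_arc[OF fV fV[OF vm], of w] as False by simp
        qed
        hence "\<forall>w\<in>W. (w, v) \<in> E0" using hinv vm Wm by blast
        thus False using indeg Wbig by blast
      qed
    qed
  qed
  thus ?thesis using e0G by blast
qed

end


lemma inj_count:
  assumes "inj_on f B" "finite Q" "inj N" "\<forall>v\<in>B. \<exists>w\<in>Q. f v = N w"
  shows "card B \<le> card Q"
proof -
  have "f ` B \<subseteq> N ` Q" using assms(4) by auto
  hence "card (f ` B) \<le> card (N ` Q)" using assms(2) by (simp add: card_mono)
  also have "\<dots> \<le> card Q" by (rule card_image_le[OF assms(2)])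
  finally show ?thesis using card_image[OF assms(1)] by simp
qed

lemma ends_count:
  assumes "inj_on f B" "\<forall>v\<in>B. f v \<in> {a, b}"
  shows "card B \<le> 2"
proof -
  have "f ` B \<subseteq> {a, b}" using assms(2) by auto
  hence "card (f ` B) \<le> card {a, b}" by (simp add: card_mono)
  also have "\<dots> \<le> 2" by (simp add: card_insert_le_m1)
  finally show ?thesis using card_image[OF assms(1)] by simp
qed

lemma deg_count:
  assumes "inj_on f B" "finite B" "finite Q" "inj N" "\<forall>v\<in>B. f v \<notin> {a, b} \<longrightarrow> (\<exists>w\<in>Q. f v = N w)"
  shows "card B \<le> card Q + 2"
proof -
  let ?B1 = "{v\<in>B. f v \<notin> {a, b}}" and ?B2 = "{v\<in>B. f v \<in> {a, b}}"
  have i1: "inj_on f ?B1" by (rule inj_on_subset[OF assms(1)]) auto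
  have i2: "inj_on f ?B2" by (rule inj_on_subset[OF assms(1)]) auto
  have "card ?B1 \<le> card Q" by (rule inj_count[OF i1 assms(3,4)]) (use assms(5) in auto)
  moreover have "card ?B2 \<le> 2" by (rule ends_count[OF i2, of a b]) auto
  moreover have "B = ?B1 \<union> ?B2" by auto
  hence "card B \<le> card ?B1 + card ?B2" by (metis card_Un_le)
  ultimately show ?thesis by linarith
qed

context f0
begin

lemma hom_inv:
  assumes hf: "\<And>u v. (u, v) \<in> E0 \<Longrightarrow> tarc n GE m E0 K (f u) (f v)"
    and that: "u \<in> {1..m}" "v \<in> {1..m}" "tarc n GE m E0 K (f u) (f v)"
  shows "(u, v) \<in> E0"
proof -
  have "u \<noteq> v" using that tarc_irrefl by metis
  thus ?thesis using E0_total[OF that(1,2)] hf tarc_asym that(3) by blast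
qed

lemma hom_inj:
  assumes hf: "\<And>u v. (u, v) \<in> E0 \<Longrightarrow> tarc n GE m E0 K (f u) (f v)"
  shows "inj_on f {1..m}"
proof (rule inj_onI)
  fix u v assume uv: "u \<in> {1..m}" "v \<in> {1..m}" "f u = f v"
  show "u = v"
  proof (rule ccontr)
    assume "u \<noteq> v"
    thus False using E0_total[OF uv(1,2)] hf tarc_irrefl uv(3) by metis
  qed
qed

lemma LR_split:
  assumes hf: "\<And>u v. (u, v) \<in> E0 \<Longrightarrow> tarc n GE m E0 K (f u) (f v)"
    and e0: "e0 \<in> arcsG n GE"
    and hS: "\<forall>v\<in>{1..m}. f v \<in> nonroot m e0 \<union> {Rt (fst e0), Rt (snd e0)}"
  shows "(\<forall>v\<in>{1..m}. \<forall>w. f v \<noteq> NR e0 w) \<or> (\<forall>v\<in>{1..m}. \<forall>w. f v \<noteq> NL e0 w)"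
proof -
  define PL where "PL = {v\<in>{1..m}. \<exists>w. f v = NL e0 w}"
  define PR where "PR = {v\<in>{1..m}. \<exists>w. f v = NR e0 w}"
  define PE where "PE = {v\<in>{1..m}. f v \<in> {Rt (fst e0), Rt (snd e0)}}"
  have fin: "finite PL" "finite PR" "finite PE" unfolding PL_def PR_def PE_def by auto
  have injPE: "inj_on f PE" using hom_inj[OF hf] by (rule inj_on_subset) (auto simp add: PE_def)
  have "card PE \<le> 2" by (rule ends_count[OF injPE]) (auto simp add: PE_def)
  moreover have "{1..m} = PL \<union> PR \<union> PE"
  proof -
    have a: "f v \<in> nonroot m e0 \<Longrightarrow> (\<exists>w. f v = NL e0 w) \<or> (\<exists>w. f v = NR e0 w)" for v
      by (cases "f v") auto
    have "v \<in> PL \<union> PR \<union> PE" if v: "v \<in> {1..m}" for v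
    proof -
      have "f v \<in> nonroot m e0 \<or> f v \<in> {Rt (fst e0), Rt (snd e0)}" using hS v by blast
      thus ?thesis using a[of v] v unfolding PL_def PR_def PE_def by blast
    qed
    moreover have "PL \<union> PR \<union> PE \<subseteq> {1..m}" unfolding PL_def PR_def PE_def by blast
    ultimately show ?thesis by blast
  qed
  hence "card {1..m} \<le> card PL + card PR + card PE"
    by (metis card_Un_le add_le_mono1 order_trans)
  hence "m \<le> card PL + card PR + card PE" by simp
  ultimately have "m \<le> card PL + card PR + 2" by linarith
  moreover have "PL \<inter> PR = {}" unfolding PL_def PR_def by auto
  moreover have "\<forall>x\<in>PL. \<forall>y\<in>PR. (x, y) \<in> E0"
  proof (intro ballI)
    fix x y assume "x \<in> PL" "y \<in> PR"
    then obtain wx wy where "f x = NL e0 wx" "f y = NR e0 wy" "x \<in> {1..m}" "y \<in> {1..m}"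
      unfolding PL_def PR_def by auto
    moreover have "wx \<in> {1..m}" "wy \<in> {1..m}" using hS calculation by force+
    ultimately have "tarc n GE m E0 K (f x) (f y)" using e0 by simp
    thus "(x, y) \<in> E0" using hom_inv[where f=f, OF hf] \<open>x \<in> {1..m}\<close> \<open>y \<in> {1..m}\<close> by blast
  qed
  moreover have "PL \<subseteq> {1..m}" "PR \<subseteq> {1..m}" unfolding PL_def PR_def by auto
  ultimately have "PL = {} \<or> PR = {}" using cut2[of PL PR] by simp
  thus ?thesis unfolding PL_def PR_def by auto
qed

lemma pin:
  assumes hf: "\<And>u v. (u, v) \<in> E0 \<Longrightarrow> tarc n GE m E0 K (f u) (f v)"
    and e0: "e0 \<in> arcsG n GE"
    and hS: "\<forall>v\<in>{1..m}. f v \<in> nonroot m e0 \<union> {Rt (fst e0), Rt (snd e0)}"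
    and Bo: "Bo \<subseteq> {1..m}" "3 \<le> card Bo" and Bi: "Bi \<subseteq> {1..m}" "3 \<le> card Bi"
    and big: "2 * real m / 3 + 2 < real (card Bo) \<or> 2 * real m / 3 + 2 < real (card Bi)"
    and ho: "\<forall>v\<in>Bo. tarc n GE m E0 K z (f v)" and hi: "\<forall>v\<in>Bi. tarc n GE m E0 K (f v) z"
  shows "z \<in> {Rt (fst e0), Rt (snd e0)}"
proof (rule ccontr)
  assume zn: "z \<notin> {Rt (fst e0), Rt (snd e0)}"
  let ?A = "tarc n GE m E0 K"
  let ?ends = "{Rt (fst e0), Rt (snd e0)}"
  have finj: "inj_on f {1..m}" by (rule hom_inj[where f=f, OF hf])
  have endsB: "card B \<le> 2" if "B \<subseteq> {1..m}" "\<forall>v\<in>B. f v \<in> nonroot m e0 \<longrightarrow> False" for B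
  proof (rule ends_count[of f B "Rt (fst e0)" "Rt (snd e0)"])
    show "inj_on f B" using finj that(1) by (rule inj_on_subset)
    show "\<forall>v\<in>B. f v \<in> ?ends" using that hS by blast
  qed
  have degO: "real (card Bo) \<le> 2 * real m / 3 + 2"
    if "inj N" "\<forall>v\<in>Bo. f v \<notin> ?ends \<longrightarrow> (\<exists>w\<in>{w. (u0, w) \<in> E0}. f v = N w)" for N u0
  proof -
    have fQ: "finite {w. (u0, w) \<in> E0}" by (rule finite_subset[of _ "{1..m}"]) (auto dest: E0_sub)
    have "card Bo \<le> card {w. (u0, w) \<in> E0} + 2"
      by (rule deg_count[OF inj_on_subset[OF finj Bo(1)] finite_subset[OF Bo(1)] fQ that]) simp
    moreover have "real (card {w. (u0, w) \<in> E0}) \<le> 2 * real m / 3" by (rule outdeg[of _ u0]) simp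
    ultimately show ?thesis by linarith
  qed
  have degI: "real (card Bi) \<le> 2 * real m / 3 + 2"
    if "inj N" "\<forall>v\<in>Bi. f v \<notin> ?ends \<longrightarrow> (\<exists>w\<in>{w. (w, u0) \<in> E0}. f v = N w)" for N u0
  proof -
    have fQ: "finite {w. (w, u0) \<in> E0}" by (rule finite_subset[of _ "{1..m}"]) (auto dest: E0_sub)
    have "card Bi \<le> card {w. (w, u0) \<in> E0} + 2"
      by (rule deg_count[OF inj_on_subset[OF finj Bi(1)] finite_subset[OF Bi(1)] fQ that]) simp
    moreover have "real (card {w. (w, u0) \<in> E0}) \<le> 2 * real m / 3" by (rule indeg[of _ u0]) simp
    ultimately show ?thesis by linarith
  qed
  have zV: "z \<in> Ti_V n GE m"
  proof -
    obtain v where "v \<in> Bo" using Bo(2) by fastforce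
    thus ?thesis using ho tarc_V by blast
  qed
  have nrV: "x \<in> Ti_V n GE m \<and> \<not> isRt x \<and> gad x = e0" if "x \<in> nonroot m e0" for x
    using that e0 by (cases x) auto
  show False
  proof (cases "isRt z")
    case True
    hence zr: "z = Rt (rix z)" by (rule isRt_eq)
    hence "rix z \<in> {1..n}" using zV by (metis TiV_simps(1))
    moreover have "rix z \<noteq> fst e0" "rix z \<noteq> snd e0" using zn zr by auto
    ultimately have "\<forall>v\<in>Bi. f v \<in> nonroot m e0 \<longrightarrow> False"
      using root_nonroot_arc[of "rix z" n e0 _ m GE E0 K] e0 hi tarc_asym zr by metis
    thus False using endsB Bi by fastforce
  next
    case nR: False
    show False
    proof (cases "gad z = e0")
      case False
      from arc_succ_total[OF this] show False
      proof
        assume as: "arc_succ (gad z) e0"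
        have "\<forall>v\<in>Bi. f v \<in> nonroot m e0 \<longrightarrow> False"
        proof (intro ballI impI)
          fix v assume "v \<in> Bi" "f v \<in> nonroot m e0"
          hence "?A z (f v)" using nonroot_arc[OF zV _ nR, of "f v"] nrV as by simp
          thus False using hi \<open>v \<in> Bi\<close> tarc_asym by blast
        qed
        thus False using endsB Bi by fastforce
      next
        assume as: "arc_succ e0 (gad z)"
        have "\<forall>v\<in>Bo. f v \<in> nonroot m e0 \<longrightarrow> False"
        proof (intro ballI impI)
          fix v assume "v \<in> Bo" "f v \<in> nonroot m e0"
          hence "?A (f v) z" using nonroot_arc[OF _ zV _ nR, of "f v"] nrV as by simp
          thus False using ho \<open>v \<in> Bo\<close> tarc_asym by blast
        qed
        thus False using endsB Bo by fastforce
      qed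
    next
      case True
      hence zn0: "z \<in> nonroot m e0" using nonroot_gad[OF zV nR] by simp
      have fv: "(\<exists>w\<in>{1..m}. f v = NL e0 w) \<or> (\<exists>w\<in>{1..m}. f v = NR e0 w)"
        if "f v \<notin> ?ends" "v \<in> {1..m}" for v
      proof -
        have "f v \<in> nonroot m e0" using hS that by blast
        thus ?thesis by (cases "f v") auto
      qed
      from LR_split[where f=f, OF hf e0 hS] consider
        (noR) "\<forall>v\<in>{1..m}. \<forall>w. f v \<noteq> NR e0 w" | (noL) "\<forall>v\<in>{1..m}. \<forall>w. f v \<noteq> NL e0 w" by blast
      note cs = this
      from zn0 obtain u0 where "z = NL e0 u0 \<or> z = NR e0 u0" "u0 \<in> {1..m}" by (cases z) auto
      thus False
      proof (elim disjE conjE)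
        assume z: "z = NL e0 u0"
        from cs show False
        proof cases
          case noR
          have "real (card Bo) \<le> 2 * real m / 3 + 2"
          proof (rule degO[of "NL e0" u0])
            show "inj (NL e0)" by (simp add: inj_def)
            show "\<forall>v\<in>Bo. f v \<notin> ?ends \<longrightarrow> (\<exists>w\<in>{w. (u0, w) \<in> E0}. f v = NL e0 w)"
            proof (intro ballI impI)
              fix v assume v: "v \<in> Bo" "f v \<notin> ?ends"
              then obtain w where w: "f v = NL e0 w" using fv noR Bo by blast
              hence "(u0, w) \<in> E0" using ho[rule_format, OF v(1)] z by simp
              thus "\<exists>w\<in>{w. (u0, w) \<in> E0}. f v = NL e0 w" using w by blast
            qed
          qed
          moreover have "real (card Bi) \<le> 2 * real m / 3 + 2"
          proof (rule degI[of "NL e0" u0])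
            show "inj (NL e0)" by (simp add: inj_def)
            show "\<forall>v\<in>Bi. f v \<notin> ?ends \<longrightarrow> (\<exists>w\<in>{w. (w, u0) \<in> E0}. f v = NL e0 w)"
            proof (intro ballI impI)
              fix v assume v: "v \<in> Bi" "f v \<notin> ?ends"
              then obtain w where w: "f v = NL e0 w" using fv noR Bi by blast
              hence "(w, u0) \<in> E0" using hi[rule_format, OF v(1)] z by simp
              thus "\<exists>w\<in>{w. (w, u0) \<in> E0}. f v = NL e0 w" using w by blast
            qed
          qed
          ultimately show False using big by linarith
        next
          case noL
          have "\<forall>v\<in>Bi. f v \<in> nonroot m e0 \<longrightarrow> False"
          proof (intro ballI impI)
            fix v assume v: "v \<in> Bi" "f v \<in> nonroot m e0"
            then obtain w where "f v = NR e0 w" using noL Bi by (cases "f v") auto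
            thus False using hi[rule_format, OF v(1)] z by (simp add: arc_succ_irrefl)
          qed
          thus False using endsB Bi by fastforce
        qed
      next
        assume z: "z = NR e0 u0"
        from cs show False
        proof cases
          case noL
          have "real (card Bo) \<le> 2 * real m / 3 + 2"
          proof (rule degO[of "NR e0" u0])
            show "inj (NR e0)" by (simp add: inj_def)
            show "\<forall>v\<in>Bo. f v \<notin> ?ends \<longrightarrow> (\<exists>w\<in>{w. (u0, w) \<in> E0}. f v = NR e0 w)"
            proof (intro ballI impI)
              fix v assume v: "v \<in> Bo" "f v \<notin> ?ends"
              then obtain w where w: "f v = NR e0 w" using fv noL Bo by blast
              hence "(u0, w) \<in> E0" using ho[rule_format, OF v(1)] z by simp
              thus "\<exists>w\<in>{w. (u0, w) \<in> E0}. f v = NR e0 w" using w by blast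
            qed
          qed
          moreover have "real (card Bi) \<le> 2 * real m / 3 + 2"
          proof (rule degI[of "NR e0" u0])
            show "inj (NR e0)" by (simp add: inj_def)
            show "\<forall>v\<in>Bi. f v \<notin> ?ends \<longrightarrow> (\<exists>w\<in>{w. (w, u0) \<in> E0}. f v = NR e0 w)"
            proof (intro ballI impI)
              fix v assume v: "v \<in> Bi" "f v \<notin> ?ends"
              then obtain w where w: "f v = NR e0 w" using fv noL Bi by blast
              hence "(w, u0) \<in> E0" using hi[rule_format, OF v(1)] z by simp
              thus "\<exists>w\<in>{w. (w, u0) \<in> E0}. f v = NR e0 w" using w by blast
            qed
          qed
          ultimately show False using big by linarith
        next
          case noR
          have "\<forall>v\<in>Bo. f v \<in> nonroot m e0 \<longrightarrow> False"
          proof (intro ballI impI)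
            fix v assume v: "v \<in> Bo" "f v \<in> nonroot m e0"
            then obtain w where "f v = NL e0 w" using noR Bo by (cases "f v") auto
            thus False using ho[rule_format, OF v(1)] z by (simp add: arc_succ_irrefl)
          qed
          thus False using endsB Bo by fastforce
        qed
      qed
    qed
  qed
qed

lemma struct_lemma:
  assumes K: "2 * real m / 3 + 2 < real K" "real K < 5 * real m / 6"
    and kF: "2 * real m / 3 + 2 < real kF" "real kF < 5 * real m / 6"
    and hg: "\<And>a b. dfa m E0 kF a b \<Longrightarrow> tarc n GE m E0 K (g a) (g b)"
  shows "\<exists>e\<in>arcsG n GE. ((g FZ = Rt (fst e) \<and> g FW = Rt (snd e)) \<or> (g FZ = Rt (snd e) \<and> g FW = Rt (fst e)))
     \<and> (\<forall>v\<in>{1..m}. g (FL v) \<in> nonroot m e \<and> g (FR v) \<in> nonroot m e) \<and> K = kF"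
proof -
  let ?A = "tarc n GE m E0 K"
  define fL where "fL = (\<lambda>v. g (FL v))"
  define fR where "fR = (\<lambda>v. g (FR v))"
  define x where "x = g FZ"
  define y where "y = g FW"
  have hL: "\<And>u v. (u, v) \<in> E0 \<Longrightarrow> ?A (fL u) (fL v)" unfolding fL_def using hg by simp
  have hR: "\<And>u v. (u, v) \<in> E0 \<Longrightarrow> ?A (fR u) (fR v)" unfolding fR_def using hg by simp
  obtain e0 where e0: "e0 \<in> arcsG n GE" and hS0: "\<forall>v\<in>{1..m}. fL v \<in> nonroot m e0 \<union> {Rt (fst e0), Rt (snd e0)}"
    using copy_lemma[where f=fL, OF hL] by blast
  obtain e1 where e1: "e1 \<in> arcsG n GE" and hS1: "\<forall>v\<in>{1..m}. fR v \<in> nonroot m e1 \<union> {Rt (fst e1), Rt (snd e1)}"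
    using copy_lemma[where f=fR, OF hR] by blast
  define B1 where "B1 = {1..kF}"
  define B2 where "B2 = {Suc kF..m}"
  have kFm: "kF + 3 \<le> m" "3 \<le> kF" using kF mbig by linarith+
  have Bs: "B1 \<subseteq> {1..m}" "B2 \<subseteq> {1..m}" "card B1 = kF" "card B2 = m - kF" using kFm
    by (auto simp: B1_def B2_def)
  have c3: "3 \<le> card B1" "3 \<le> card B2" using Bs kFm by auto
  have bigB1: "2 * real m / 3 + 2 < real (card B1)" using Bs kF by simp
  have a1: "\<forall>v\<in>B1. ?A x (fL v)" "\<forall>v\<in>B1. ?A (fL v) y" "\<forall>v\<in>B2. ?A (fL v) x" "\<forall>v\<in>B2. ?A y (fL v)"
    "\<forall>v\<in>B1. ?A y (fR v)" "\<forall>v\<in>B1. ?A (fR v) x" "\<forall>v\<in>B2. ?A (fR v) y" "\<forall>v\<in>B2. ?A x (fR v)"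
    unfolding x_def y_def fL_def fR_def B1_def B2_def using hg by auto
  have x0: "x \<in> {Rt (fst e0), Rt (snd e0)}"
    by (rule pin[where f=fL, OF hL e0 hS0 Bs(1) c3(1) Bs(2) c3(2)]) (use bigB1 a1 in auto)
  have y0: "y \<in> {Rt (fst e0), Rt (snd e0)}"
    by (rule pin[where f=fL, OF hL e0 hS0 Bs(2) c3(2) Bs(1) c3(1)]) (use bigB1 a1 in auto)
  have x1: "x \<in> {Rt (fst e1), Rt (snd e1)}"
    by (rule pin[where f=fR, OF hR e1 hS1 Bs(2) c3(2) Bs(1) c3(1)]) (use bigB1 a1 in auto)
  have y1: "y \<in> {Rt (fst e1), Rt (snd e1)}"
    by (rule pin[where f=fR, OF hR e1 hS1 Bs(1) c3(1) Bs(2) c3(2)]) (use bigB1 a1 in auto)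
  have "1 \<in> B1" using kFm by (simp add: B1_def)
  hence xy: "x \<noteq> y" using a1(1,2) tarc_asym by blast
  have or0: "(x = Rt (fst e0) \<and> y = Rt (snd e0)) \<or> (x = Rt (snd e0) \<and> y = Rt (fst e0))"
    using x0 y0 xy by auto
  have "e1 = e0"
    using x0 y0 x1 y1 xy arcsG_D[OF e0] arcsG_D[OF e1] by (cases e0; cases e1) auto
  hence hS1': "\<forall>v\<in>{1..m}. fR v \<in> nonroot m e0 \<union> {Rt (fst e0), Rt (snd e0)}" using hS1 by simp
  have B12: "v \<in> B1 \<or> v \<in> B2" if "v \<in> {1..m}" for v using that by (auto simp: B1_def B2_def)
  have nL: "fL v \<in> nonroot m e0" if v: "v \<in> {1..m}" for v
  proof -
    have "fL v \<noteq> x \<and> fL v \<noteq> y" using B12[OF v] a1 tarc_irrefl by metis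
    thus ?thesis using hS0 v or0 by auto
  qed
  have nR: "fR v \<in> nonroot m e0" if v: "v \<in> {1..m}" for v
  proof -
    have "fR v \<noteq> x \<and> fR v \<noteq> y" using B12[OF v] a1 tarc_irrefl by metis
    thus ?thesis using hS1' v or0 by auto
  qed
  have finjL: "inj_on fL {1..m}" by (rule hom_inj[where f=fL, OF hL])
  have ne: "fst e0 \<noteq> snd e0" using arcsG_D[OF e0] by simp
  have Kk: "K = kF"
  proof -
    have injNL: "inj (NL e0)" and injNR: "inj (NR e0)" by (simp_all add: inj_def)
    have fin: "finite {1..K}" "finite {Suc K..m}" by simp_all
    have cK: "card {1..K} = K" "card {Suc K..m} = m - K" by simp_all
    have iB1: "inj_on fL B1" "inj_on fL B2" using finjL Bs by (auto intro: inj_on_subset)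
    from LR_split[where f=fL, OF hL e0 hS0] consider
        (noR) "\<forall>v\<in>{1..m}. \<forall>w. fL v \<noteq> NR e0 w" | (noL) "\<forall>v\<in>{1..m}. \<forall>w. fL v \<noteq> NL e0 w" by blast
    thus ?thesis
    proof cases
      case noR
      have side: "\<exists>w\<in>{1..m}. fL v = NL e0 w" if "v \<in> {1..m}" for v
        using nL[OF that] noR that by (cases "fL v") auto
      from or0 show ?thesis
      proof
        assume xy0: "x = Rt (fst e0) \<and> y = Rt (snd e0)"
        have "card B1 \<le> card {1..K}"
        proof (rule inj_count[OF iB1(1) fin(1) injNL], rule ballI)
          fix v assume v: "v \<in> B1"
          then obtain w where w: "w \<in> {1..m}" "fL v = NL e0 w" using side Bs by blast
          have "?A x (fL v)" using a1 v by blast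
          thus "\<exists>w\<in>{1..K}. fL v = NL e0 w" using w xy0 ne by auto
        qed
        moreover have "card B2 \<le> card {Suc K..m}"
        proof (rule inj_count[OF iB1(2) fin(2) injNL], rule ballI)
          fix v assume v: "v \<in> B2"
          then obtain w where w: "w \<in> {1..m}" "fL v = NL e0 w" using side Bs by blast
          have "?A (fL v) x" using a1 v by blast
          thus "\<exists>w\<in>{Suc K..m}. fL v = NL e0 w" using w xy0 ne by auto
        qed
        ultimately show ?thesis using Bs cK kFm by linarith
      next
        assume xy0: "x = Rt (snd e0) \<and> y = Rt (fst e0)"
        have "card B1 \<le> card {Suc K..m}"
        proof (rule inj_count[OF iB1(1) fin(2) injNL], rule ballI)
          fix v assume v: "v \<in> B1"
          then obtain w where w: "w \<in> {1..m}" "fL v = NL e0 w" using side Bs by blast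
          have "?A x (fL v)" using a1 v by blast
          thus "\<exists>w\<in>{Suc K..m}. fL v = NL e0 w" using w xy0 ne by auto
        qed
        thus ?thesis using Bs cK K kF by linarith
      qed
    next
      case noL
      have side: "\<exists>w\<in>{1..m}. fL v = NR e0 w" if "v \<in> {1..m}" for v
        using nL[OF that] noL that by (cases "fL v") auto
      from or0 show ?thesis
      proof
        assume xy0: "x = Rt (fst e0) \<and> y = Rt (snd e0)"
        have "card B1 \<le> card {Suc K..m}"
        proof (rule inj_count[OF iB1(1) fin(2) injNR], rule ballI)
          fix v assume v: "v \<in> B1"
          then obtain w where w: "w \<in> {1..m}" "fL v = NR e0 w" using side Bs by blast
          have "?A x (fL v)" using a1 v by blast
          thus "\<exists>w\<in>{Suc K..m}. fL v = NR e0 w" using w xy0 ne by auto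
        qed
        thus ?thesis using Bs cK K kF by linarith
      next
        assume xy0: "x = Rt (snd e0) \<and> y = Rt (fst e0)"
        have "card B1 \<le> card {1..K}"
        proof (rule inj_count[OF iB1(1) fin(1) injNR], rule ballI)
          fix v assume v: "v \<in> B1"
          then obtain w where w: "w \<in> {1..m}" "fL v = NR e0 w" using side Bs by blast
          have "?A x (fL v)" using a1 v by blast
          thus "\<exists>w\<in>{1..K}. fL v = NR e0 w" using w xy0 ne by auto
        qed
        moreover have "card B2 \<le> card {Suc K..m}"
        proof (rule inj_count[OF iB1(2) fin(2) injNR], rule ballI)
          fix v assume v: "v \<in> B2"
          then obtain w where w: "w \<in> {1..m}" "fL v = NR e0 w" using side Bs by blast
          have "?A (fL v) x" using a1 v by blast
          thus "\<exists>w\<in>{Suc K..m}. fL v = NR e0 w" using w xy0 ne by auto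
        qed
        ultimately show ?thesis using Bs cK kFm by linarith
      qed
    qed
  qed
  show ?thesis
    using e0 or0 nL nR Kk unfolding x_def y_def fL_def fR_def by blast
qed

end


section \<open>The tournament T_G^star\<close>

lemma Tstar_V: "(i, j, v) \<in> fst (Tstar s r n GE m E0 k) \<longleftrightarrow>
   i \<in> {1..s} \<and> j \<in> {1..r i} \<and> v \<in> Ti_V n GE m"
  by (simp add: Tstar_def Let_def)

lemma Tstar_E_raw: "((i, j, u), (i', j', v)) \<in> snd (Tstar s r n GE m E0 k) \<longleftrightarrow>
   (i = i' \<and> j = j' \<and> i \<in> {1..s} \<and> j \<in> {1..r i} \<and> (u, v) \<in> Ti_E n GE m E0 (k i)) \<or>
   ((i, j, u) \<in> fst (Tstar s r n GE m E0 k) \<and> (i', j', v) \<in> fst (Tstar s r n GE m E0 k) \<and>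
     (i < i' \<or> (i = i' \<and> j < j')))"
  unfolding Tstar_V by (simp add: Tstar_def Let_def) blast

locale mainloc = f0 +
  fixes s :: nat and r :: "nat \<Rightarrow> nat" and n :: nat and GE :: "nat set set" and k :: "nat \<Rightarrow> nat"
  assumes vk: "valid_ks s m k"
begin

abbreviation "T \<equiv> Tstar s r n GE m E0 k"

lemma k_bounds: assumes "i \<in> {1..s}"
  shows "2 * real m / 3 + 2 < real (k i)" "real (k i) < 5 * real m / 6" "k i \<le> m"
proof -
  show "2 * real m / 3 + 2 < real (k i)" "real (k i) < 5 * real m / 6" using vk assms unfolding valid_ks_def by blast+
  thus "k i \<le> m" by linarith
qed

lemma k_dec: assumes "1 \<le> a" "a < b" "b \<le> s" shows "k b < k a"
  using assms
proof (induction b)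
  case 0 thus ?case by simp
next
  case (Suc b)
  have st: "k (Suc b) + 1 < k b" using vk Suc.prems unfolding valid_ks_def by auto
  show ?case
  proof (cases "a = b")
    case True thus ?thesis using st by simp
  next
    case False
    hence "k b < k a" using Suc by simp
    thus ?thesis using st by simp
  qed
qed

lemma k_inj: assumes "a \<in> {1..s}" "b \<in> {1..s}" "k a = k b" shows "a = b"
  using k_dec[of a b] k_dec[of b a] assms by (cases a b rule: linorder_cases) auto

lemma TE_iff: "((i, j, u), (i', j', v)) \<in> snd T \<longleftrightarrow>
   (i, j, u) \<in> fst T \<and> (i', j', v) \<in> fst T \<and>
   (if i = i' \<and> j = j' then tarc n GE m E0 (k i) u v else (i < i' \<or> (i = i' \<and> j < j')))"
proof (cases "i = i' \<and> j = j'")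
  case True
  have "(u, v) \<in> Ti_E n GE m E0 (k i) \<longleftrightarrow> tarc n GE m E0 (k i) u v" if "i \<in> {1..s}"
    using Ti_E_iff[OF E0_subset k_bounds(3)[OF that]] .
  thus ?thesis using True unfolding Tstar_E_raw Tstar_V by (auto dest: tarc_V)
next
  case False
  thus ?thesis unfolding Tstar_E_raw by auto
qed

end


section \<open>Facts about F^dagger\<close>

lemma Fdag_V: "fst (Fdag m E0 K) = {FZ, FW} \<union> FL ` {1..m} \<union> FR ` {1..m}"
  by (auto simp: Fdag_def Fbb_def Let_def image_image)

lemma Fdag_V_iff: "a \<in> fst (Fdag m E0 K) \<longleftrightarrow> a = FZ \<or> a = FW \<or> (\<exists>v\<in>{1..m}. a = FL v) \<or> (\<exists>v\<in>{1..m}. a = FR v)"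
  unfolding Fdag_V by auto

lemma Fdag_V_finite: "finite (fst (Fdag m E0 K))" unfolding Fdag_V by simp

lemma dfa_V: "dfa m E0 K a b \<Longrightarrow> K \<le> m \<Longrightarrow> E0 \<subseteq> {1..m} \<times> {1..m} \<Longrightarrow>
   a \<in> fst (Fdag m E0 K) \<and> b \<in> fst (Fdag m E0 K)"
  unfolding Fdag_V_iff by (cases a; cases b) auto

fun sw :: "fd \<Rightarrow> fd" where
  "sw FZ = FW" | "sw FW = FZ" | "sw (FL v) = FR v" | "sw (FR v) = FL v"

lemma sw_sw[simp]: "sw (sw a) = a" by (cases a) auto
lemma sw_V: "a \<in> fst (Fdag m E0 K) \<Longrightarrow> sw a \<in> fst (Fdag m E0 K)"
  unfolding Fdag_V_iff by (cases a) auto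
lemma sw_dfa: "dfa m E0 K (sw a) (sw b) = dfa m E0 K a b"
  by (cases a; cases b) auto

lemma hom_maps_finite: "finite (fst T') \<Longrightarrow> finite (hom_maps (Fdag m E0 K) T')"
  unfolding hom_maps_def by (rule finite_subset[OF _ finite_PiE[OF Fdag_V_finite]]) auto

lemma swap_card_le:
  fixes T' :: "'b digraph"
  assumes fin: "finite (fst T')" and Km: "K \<le> m" and E0s: "E0 \<subseteq> {1..m} \<times> {1..m}"
  shows "card {\<phi> \<in> hom_maps (Fdag m E0 K) T'. \<phi> FZ = x \<and> \<phi> FW = y}
       \<le> card {\<phi> \<in> hom_maps (Fdag m E0 K) T'. \<phi> FZ = y \<and> \<phi> FW = x}"
proof -
  let ?F = "Fdag m E0 K"
  let ?VF = "fst ?F"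
  define h where "h \<phi> = (\<lambda>u\<in>?VF. \<phi> (sw u))" for \<phi> :: "fd \<Rightarrow> 'b"
  have FZV: "FZ \<in> ?VF" "FW \<in> ?VF" unfolding Fdag_V by auto
  show ?thesis
  proof (rule card_inj_on_le)
    show "finite {\<phi> \<in> hom_maps ?F T'. \<phi> FZ = y \<and> \<phi> FW = x}"
      using hom_maps_finite[OF fin] by simp
    show "h ` {\<phi> \<in> hom_maps ?F T'. \<phi> FZ = x \<and> \<phi> FW = y} \<subseteq> {\<phi> \<in> hom_maps ?F T'. \<phi> FZ = y \<and> \<phi> FW = x}"
    proof (rule image_subsetI)
      fix \<phi> assume "\<phi> \<in> {\<phi> \<in> hom_maps ?F T'. \<phi> FZ = x \<and> \<phi> FW = y}"
      hence \<phi>: "\<phi> \<in> hom_maps ?F T'" "\<phi> FZ = x" "\<phi> FW = y" by auto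
      have 1: "h \<phi> FZ = y" "h \<phi> FW = x" using \<phi> FZV by (simp_all add: h_def)
      have 2: "h \<phi> \<in> ?VF \<rightarrow>\<^sub>E fst T'" using \<phi>(1) sw_V unfolding hom_maps_def h_def by (auto simp: PiE_def Pi_def)
      have 3: "(h \<phi> a, h \<phi> b) \<in> snd T'" if ab: "(a, b) \<in> snd ?F" for a b
      proof -
        have "(sw a, sw b) \<in> snd ?F" using ab by (simp add: Fdag_arc sw_dfa)
        hence "(\<phi> (sw a), \<phi> (sw b)) \<in> snd T'" using \<phi>(1) unfolding hom_maps_def by blast
        moreover have "a \<in> ?VF" "b \<in> ?VF" using dfa_V[OF _ Km E0s] ab by (simp_all add: Fdag_arc)
        ultimately show ?thesis by (simp add: h_def)
      qed
      show "h \<phi> \<in> {\<phi> \<in> hom_maps ?F T'. \<phi> FZ = y \<and> \<phi> FW = x}"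
        using 1 2 3 unfolding hom_maps_def by auto
    qed
    show "inj_on h {\<phi> \<in> hom_maps ?F T'. \<phi> FZ = x \<and> \<phi> FW = y}"
    proof (rule inj_onI)
      fix \<phi> \<psi> assume a: "\<phi> \<in> {\<phi> \<in> hom_maps ?F T'. \<phi> FZ = x \<and> \<phi> FW = y}"
        "\<psi> \<in> {\<phi> \<in> hom_maps ?F T'. \<phi> FZ = x \<and> \<phi> FW = y}" "h \<phi> = h \<psi>"
      have ext: "\<phi> \<in> extensional ?VF" "\<psi> \<in> extensional ?VF" using a(1,2) unfolding hom_maps_def by (auto simp: PiE_def)
      show "\<phi> = \<psi>"
      proof (rule extensionalityI[OF ext])
        fix u assume u: "u \<in> ?VF"
        have "h \<phi> (sw u) = h \<psi> (sw u)" using a(3) by simp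
        thus "\<phi> u = \<psi> u" using sw_V[OF u] by (simp add: h_def)
      qed
    qed
  qed
qed


fun dloc :: "(nat \<times> nat) set \<Rightarrow> nat \<Rightarrow> fd \<Rightarrow> fd \<Rightarrow> bool" where
  "dloc E0 K FZ FW = True"
| "dloc E0 K FW FZ = False"
| "dloc E0 K FZ FZ = False"
| "dloc E0 K FW FW = False"
| "dloc E0 K FZ (FL v) = (v \<le> K)"
| "dloc E0 K (FL v) FZ = (K < v)"
| "dloc E0 K FW (FL v) = (K < v)"
| "dloc E0 K (FL v) FW = (v \<le> K)"
| "dloc E0 K FZ (FR v) = (K < v)"
| "dloc E0 K (FR v) FZ = (v \<le> K)"
| "dloc E0 K FW (FR v) = (v \<le> K)"
| "dloc E0 K (FR v) FW = (K < v)"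
| "dloc E0 K (FL u) (FL v) = ((u, v) \<in> E0)"
| "dloc E0 K (FR u) (FR v) = ((u, v) \<in> E0)"
| "dloc E0 K (FL u) (FR v) = True"
| "dloc E0 K (FR u) (FL v) = False"

lemma embed_tarc:
  assumes "e \<in> arcsG n GE" "a \<in> fst (Fdag m E0 K')" "b \<in> fst (Fdag m E0 K')" "E0 \<subseteq> {1..m} \<times> {1..m}"
  shows "tarc n GE m E0 K (embed e a) (embed e b) = dloc E0 K a b"
proof -
  have e: "1 \<le> fst e" "fst e < snd e" "snd e \<le> n" using arcsG_D[OF assms(1)] by auto
  have E: "(u, v) \<in> E0 \<Longrightarrow> u \<in> {1..m} \<and> v \<in> {1..m}" for u v using assms(4) by auto
  show ?thesis using assms(2,3) e assms(1) unfolding Fdag_V_iff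
    by (cases a; cases b) (auto dest: E simp: arc_succ_irrefl)
qed

lemma dfa_dloc: "dfa m E0 K a b \<Longrightarrow> dloc E0 K a b"
  by (cases a; cases b) auto

lemma embed_inj: "fst e \<noteq> snd e \<Longrightarrow> embed e a = embed e b \<Longrightarrow> a = b"
  by (cases a; cases b) auto

fun unemb :: "nat \<times> nat \<Rightarrow> tv \<Rightarrow> fd" where
  "unemb e (Rt c) = (if c = fst e then FZ else FW)"
| "unemb e (NL _ w) = FL w"
| "unemb e (NR _ w) = FR w"

definition Hc :: "nat \<Rightarrow> (nat \<times> nat) set \<Rightarrow> nat \<Rightarrow> (fd \<Rightarrow> fd) set" where
  "Hc m E0 K = {\<psi> \<in> fst (Fdag m E0 K) \<rightarrow>\<^sub>E fst (Fdag m E0 K).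
     (\<forall>(a, b)\<in>snd (Fdag m E0 K). dloc E0 K (\<psi> a) (\<psi> b)) \<and> \<psi> FZ = FZ \<and> \<psi> FW = FW}"

context mainloc
begin

definition lexle :: "nat \<times> nat \<times> tv \<Rightarrow> nat \<times> nat \<times> tv \<Rightarrow> bool" where
  "lexle p q \<longleftrightarrow> fst p < fst q \<or> (fst p = fst q \<and> fst (snd p) \<le> fst (snd q))"

lemma arc_lexle: "(p, q) \<in> snd T \<Longrightarrow> lexle p q"
  by (cases p; cases q) (auto simp: TE_iff lexle_def split: if_splits)

lemma lexle_trans: "lexle p q \<Longrightarrow> lexle q w \<Longrightarrow> lexle p w"
  unfolding lexle_def by auto

lemma lexle_antisym: "lexle p q \<Longrightarrow> lexle q p \<Longrightarrow> fst p = fst q \<and> fst (snd p) = fst (snd q)"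
  unfolding lexle_def by auto

lemma same_copy:
  assumes hom: "\<phi> \<in> hom_maps (Fdag m E0 K) T" and K: "1 \<le> K" "K < m"
    and u: "u \<in> fst (Fdag m E0 K)"
  shows "fst (\<phi> u) = fst (\<phi> FZ) \<and> fst (snd (\<phi> u)) = fst (snd (\<phi> FZ))"
proof -
  have arc: "lexle (\<phi> a) (\<phi> b)" if "dfa m E0 K a b" for a b
  proof -
    have "(a, b) \<in> snd (Fdag m E0 K)" using that by (simp add: Fdag_arc)
    hence "(\<phi> a, \<phi> b) \<in> snd T" using hom unfolding hom_maps_def by blast
    thus ?thesis by (rule arc_lexle)
  qed
  have "lexle (\<phi> FZ) (\<phi> (FL 1))" "lexle (\<phi> (FL 1)) (\<phi> FW)"
    "lexle (\<phi> FW) (\<phi> (FL m))" "lexle (\<phi> (FL m)) (\<phi> FZ)" using K by (auto intro!: arc)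
  hence xy: "lexle (\<phi> FZ) (\<phi> FW)" "lexle (\<phi> FW) (\<phi> FZ)" using lexle_trans by blast+
  have "lexle (\<phi> FZ) (\<phi> u) \<and> lexle (\<phi> u) (\<phi> FW) \<or> lexle (\<phi> FW) (\<phi> u) \<and> lexle (\<phi> u) (\<phi> FZ)"
  proof -
    consider "u = FZ" | "u = FW" | v where "v \<in> {1..m}" "u = FL v" | v where "v \<in> {1..m}" "u = FR v"
      using u unfolding Fdag_V_iff by blast
    thus ?thesis
    proof cases
      case 1 thus ?thesis using xy by (simp add: lexle_def)
    next
      case 2 thus ?thesis using xy by (simp add: lexle_def)
    next
      case (3 v) thus ?thesis by (cases "v \<le> K") (auto intro!: arc)
    next
      case (4 v) thus ?thesis by (cases "v \<le> K") (auto intro!: arc)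
    qed
  qed
  thus ?thesis using xy lexle_trans lexle_antisym by metis
qed

lemma hom_g:
  assumes hom: "\<phi> \<in> hom_maps (Fdag m E0 K) T" and K: "1 \<le> K" "K < m"
  shows "\<forall>u\<in>fst (Fdag m E0 K). \<phi> u = (fst (\<phi> FZ), fst (snd (\<phi> FZ)), snd (snd (\<phi> u)))"
    "fst (\<phi> FZ) \<in> {1..s}" "fst (snd (\<phi> FZ)) \<in> {1..r (fst (\<phi> FZ))}"
    "\<And>a b. dfa m E0 K a b \<Longrightarrow> tarc n GE m E0 (k (fst (\<phi> FZ))) (snd (snd (\<phi> a))) (snd (snd (\<phi> b)))"
proof -
  show eq: "\<forall>u\<in>fst (Fdag m E0 K). \<phi> u = (fst (\<phi> FZ), fst (snd (\<phi> FZ)), snd (snd (\<phi> u)))"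
    using same_copy[OF hom K] by (metis prod.collapse)
  have "FZ \<in> fst (Fdag m E0 K)" unfolding Fdag_V by simp
  hence "\<phi> FZ \<in> fst T" using hom unfolding hom_maps_def by (auto simp: PiE_def Pi_def)
  thus "fst (\<phi> FZ) \<in> {1..s}" "fst (snd (\<phi> FZ)) \<in> {1..r (fst (\<phi> FZ))}"
    by (metis Tstar_V prod.collapse)+
  fix a b assume ab: "dfa m E0 K a b"
  have V: "a \<in> fst (Fdag m E0 K)" "b \<in> fst (Fdag m E0 K)" using dfa_V[OF ab _ E0_subset] K by auto
  have "(a, b) \<in> snd (Fdag m E0 K)" using ab by (simp add: Fdag_arc)
  hence "(\<phi> a, \<phi> b) \<in> snd T" using hom unfolding hom_maps_def by blast
  hence "((fst (\<phi> FZ), fst (snd (\<phi> FZ)), snd (snd (\<phi> a))), (fst (\<phi> FZ), fst (snd (\<phi> FZ)), snd (snd (\<phi> b)))) \<in> snd T"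
    using eq V by metis
  thus "tarc n GE m E0 (k (fst (\<phi> FZ))) (snd (snd (\<phi> a))) (snd (snd (\<phi> b)))"
    unfolding TE_iff by simp
qed

lemma hom_struct:
  assumes i0: "i0 \<in> {1..s}" and hom: "\<phi> \<in> hom_maps (Fdag m E0 (k i0)) T"
  shows "\<exists>j\<in>{1..r i0}. \<exists>e\<in>arcsG n GE.
     (\<forall>u\<in>fst (Fdag m E0 (k i0)). \<phi> u = (i0, j, snd (snd (\<phi> u)))) \<and>
     ((\<phi> FZ = (i0, j, Rt (fst e)) \<and> \<phi> FW = (i0, j, Rt (snd e))) \<or> (\<phi> FZ = (i0, j, Rt (snd e)) \<and> \<phi> FW = (i0, j, Rt (fst e)))) \<and>
     (\<forall>v\<in>{1..m}. snd (snd (\<phi> (FL v))) \<in> nonroot m e \<and> snd (snd (\<phi> (FR v))) \<in> nonroot m e)"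
proof -
  let ?K = "k i0"
  have K: "1 \<le> ?K" "?K < m" using k_bounds[OF i0] by linarith+
  note hg = hom_g[OF hom K]
  define i' where "i' = fst (\<phi> FZ)"
  define j' where "j' = fst (snd (\<phi> FZ))"
  define g where "g = (\<lambda>u. snd (snd (\<phi> u)))"
  have i': "i' \<in> {1..s}" "j' \<in> {1..r i'}" using hg(2,3) unfolding i'_def j'_def by auto
  have hgg: "\<And>a b. dfa m E0 ?K a b \<Longrightarrow> tarc n GE m E0 (k i') (g a) (g b)"
    using hg(4) unfolding g_def i'_def by blast
  obtain e where e: "e \<in> arcsG n GE"
    and ends: "(g FZ = Rt (fst e) \<and> g FW = Rt (snd e)) \<or> (g FZ = Rt (snd e) \<and> g FW = Rt (fst e))"
    and nr: "\<forall>v\<in>{1..m}. g (FL v) \<in> nonroot m e \<and> g (FR v) \<in> nonroot m e" and kk: "k i' = ?K"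
    using struct_lemma[where g=g, OF k_bounds(1,2)[OF i'(1)] k_bounds(1,2)[OF i0] hgg] by blast
  have "i' = i0" using k_inj[OF i'(1) i0 kk] .
  have V: "FZ \<in> fst (Fdag m E0 ?K)" "FW \<in> fst (Fdag m E0 ?K)" unfolding Fdag_V by auto
  show ?thesis
  proof (intro bexI[of _ j'] bexI[of _ e] conjI)
    show "\<forall>u\<in>fst (Fdag m E0 ?K). \<phi> u = (i0, j', snd (snd (\<phi> u)))"
      using hg(1) \<open>i' = i0\<close> unfolding i'_def j'_def by simp
    show "(\<phi> FZ = (i0, j', Rt (fst e)) \<and> \<phi> FW = (i0, j', Rt (snd e))) \<or> (\<phi> FZ = (i0, j', Rt (snd e)) \<and> \<phi> FW = (i0, j', Rt (fst e)))"
      using ends hg(1) V \<open>i' = i0\<close> unfolding g_def i'_def j'_def by metis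
    show "\<forall>v\<in>{1..m}. snd (snd (\<phi> (FL v))) \<in> nonroot m e \<and> snd (snd (\<phi> (FR v))) \<in> nonroot m e"
      using nr unfolding g_def .
  qed (use e i' \<open>i' = i0\<close> in auto)
qed

lemma embed_V: "e \<in> arcsG n GE \<Longrightarrow> w \<in> fst (Fdag m E0 K') \<Longrightarrow> embed e w \<in> Ti_V n GE m"
  unfolding Fdag_V_iff using arcsG_D[of e n GE] by (cases w) auto

lemma count:
  assumes i0: "i0 \<in> {1..s}" and j: "j \<in> {1..r i0}" and e: "e \<in> arcsG n GE"
  shows "card {\<phi> \<in> hom_maps (Fdag m E0 (k i0)) T. \<phi> FZ = (i0, j, Rt (fst e)) \<and> \<phi> FW = (i0, j, Rt (snd e))}
    = card (Hc m E0 (k i0))"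
proof -
  let ?K = "k i0"
  let ?F = "Fdag m E0 ?K"
  let ?VF = "fst ?F"
  define loc where "loc w = (i0, j, embed e w)" for w
  define L where "L \<psi> = (\<lambda>u\<in>?VF. loc (\<psi> u))" for \<psi>
  let ?H = "{\<phi> \<in> hom_maps ?F T. \<phi> FZ = (i0, j, Rt (fst e)) \<and> \<phi> FW = (i0, j, Rt (snd e))}"
  have Km: "?K \<le> m" "1 \<le> ?K" "?K < m" using k_bounds[OF i0] by linarith+
  have ne: "fst e \<noteq> snd e" using arcsG_D[OF e] by simp
  have VZ: "FZ \<in> ?VF" "FW \<in> ?VF" unfolding Fdag_V by auto
  have arcV: "(a, b) \<in> snd ?F \<Longrightarrow> a \<in> ?VF \<and> b \<in> ?VF" for a b
    using dfa_V[OF _ Km(1) E0_subset] by (simp add: Fdag_arc)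
  have locV: "w \<in> ?VF \<Longrightarrow> loc w \<in> fst T" for w
    using embed_V[OF e] i0 j unfolding loc_def Tstar_V by blast
  have sub1: "L ` Hc m E0 ?K \<subseteq> ?H"
  proof (rule image_subsetI)
    fix \<psi> assume "\<psi> \<in> Hc m E0 ?K"
    hence \<psi>: "\<psi> \<in> ?VF \<rightarrow>\<^sub>E ?VF" "\<forall>(a, b)\<in>snd ?F. dloc E0 ?K (\<psi> a) (\<psi> b)" "\<psi> FZ = FZ" "\<psi> FW = FW"
      unfolding Hc_def by auto
    have 1: "L \<psi> \<in> ?VF \<rightarrow>\<^sub>E fst T" using \<psi>(1) locV unfolding L_def by (auto simp: PiE_def Pi_def)
    have 2: "(L \<psi> a, L \<psi> b) \<in> snd T" if ab: "(a, b) \<in> snd ?F" for a b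
    proof -
      have V: "a \<in> ?VF" "b \<in> ?VF" using arcV[OF ab] by auto
      hence V': "\<psi> a \<in> ?VF" "\<psi> b \<in> ?VF" using \<psi>(1) by auto
      have "dloc E0 ?K (\<psi> a) (\<psi> b)" using \<psi>(2) ab by auto
      hence "tarc n GE m E0 ?K (embed e (\<psi> a)) (embed e (\<psi> b))"
        using embed_tarc[OF e V' E0_subset] by simp
      thus ?thesis using V V' locV unfolding L_def by (simp add: TE_iff loc_def)
    qed
    have 3: "L \<psi> FZ = (i0, j, Rt (fst e))" "L \<psi> FW = (i0, j, Rt (snd e))"
      using VZ \<psi>(3,4) unfolding L_def loc_def by auto
    show "L \<psi> \<in> ?H" using 1 2 3 unfolding hom_maps_def by auto
  qed
  have sub2: "?H \<subseteq> L ` Hc m E0 ?K"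
  proof
    fix \<phi> assume "\<phi> \<in> ?H"
    hence hom: "\<phi> \<in> hom_maps ?F T" and xy: "\<phi> FZ = (i0, j, Rt (fst e))" "\<phi> FW = (i0, j, Rt (snd e))" by auto
    obtain j' e' where j': "j' \<in> {1..r i0}" and e': "e' \<in> arcsG n GE"
      and cp: "\<forall>u\<in>?VF. \<phi> u = (i0, j', snd (snd (\<phi> u)))"
      and ends: "(\<phi> FZ = (i0, j', Rt (fst e')) \<and> \<phi> FW = (i0, j', Rt (snd e'))) \<or> (\<phi> FZ = (i0, j', Rt (snd e')) \<and> \<phi> FW = (i0, j', Rt (fst e')))"
      and nr: "\<forall>v\<in>{1..m}. snd (snd (\<phi> (FL v))) \<in> nonroot m e' \<and> snd (snd (\<phi> (FR v))) \<in> nonroot m e'"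
      using hom_struct[OF i0 hom] by blast
    have "j' = j" "e' = e" using ends xy arcsG_D[OF e] arcsG_D[OF e'] by (cases e; cases e'; auto)+
    define g where "g u = snd (snd (\<phi> u))" for u
    have cp': "\<phi> u = (i0, j, g u)" if "u \<in> ?VF" for u using cp that \<open>j' = j\<close> unfolding g_def by auto
    have gZ: "g FZ = Rt (fst e)" "g FW = Rt (snd e)" using xy unfolding g_def by auto
    have nr': "\<forall>v\<in>{1..m}. g (FL v) \<in> nonroot m e \<and> g (FR v) \<in> nonroot m e" using nr \<open>e' = e\<close> unfolding g_def by simp
    define \<psi> where "\<psi> = (\<lambda>u\<in>?VF. unemb e (g u))"
    have key: "\<psi> u \<in> ?VF \<and> embed e (\<psi> u) = g u" if u: "u \<in> ?VF" for u
    proof -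
      consider "u = FZ" | "u = FW" | v where "v \<in> {1..m}" "u = FL v" | v where "v \<in> {1..m}" "u = FR v"
        using u unfolding Fdag_V_iff by blast
      thus ?thesis
      proof cases
        case 1 thus ?thesis using gZ VZ unfolding \<psi>_def by simp
      next
        case 2 thus ?thesis using gZ VZ ne unfolding \<psi>_def by simp
      next
        case (3 v)
        hence "g u \<in> nonroot m e" using nr' by auto
        thus ?thesis using u 3 unfolding \<psi>_def by (cases "g u") (auto simp: Fdag_V_iff)
      next
        case (4 v)
        hence "g u \<in> nonroot m e" using nr' by auto
        thus ?thesis using u 4 unfolding \<psi>_def by (cases "g u") (auto simp: Fdag_V_iff)
      qed
    qed
    have "\<psi> \<in> Hc m E0 ?K"
      unfolding Hc_def
    proof (intro CollectI conjI)
      show "\<psi> \<in> ?VF \<rightarrow>\<^sub>E ?VF" using key unfolding \<psi>_def by (auto simp: PiE_def Pi_def)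
      show "\<psi> FZ = FZ" "\<psi> FW = FW" using VZ gZ ne unfolding \<psi>_def by auto
      show "\<forall>(a, b)\<in>snd ?F. dloc E0 ?K (\<psi> a) (\<psi> b)"
      proof (clarify)
        fix a b assume ab: "(a, b) \<in> snd ?F"
        have V: "a \<in> ?VF" "b \<in> ?VF" using arcV[OF ab] by auto
        have "(\<phi> a, \<phi> b) \<in> snd T" using hom ab unfolding hom_maps_def by blast
        hence "tarc n GE m E0 ?K (g a) (g b)" using cp'[OF V(1)] cp'[OF V(2)] by (simp add: TE_iff)
        hence "tarc n GE m E0 ?K (embed e (\<psi> a)) (embed e (\<psi> b))" using key V by simp
        thus "dloc E0 ?K (\<psi> a) (\<psi> b)" using embed_tarc[OF e _ _ E0_subset] key V by blast
      qed
    qed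
    moreover have "\<phi> = L \<psi>"
    proof (rule extensionalityI)
      show "\<phi> \<in> extensional ?VF" using hom unfolding hom_maps_def by (auto simp: PiE_def)
      show "L \<psi> \<in> extensional ?VF" unfolding L_def by simp
      fix u assume u: "u \<in> ?VF"
      show "\<phi> u = L \<psi> u" using cp'[OF u] key[OF u] u unfolding L_def loc_def by simp
    qed
    ultimately show "\<phi> \<in> L ` Hc m E0 ?K" by blast
  qed
  have inj: "inj_on L (Hc m E0 ?K)"
  proof (rule inj_onI)
    fix \<psi>1 \<psi>2 assume a: "\<psi>1 \<in> Hc m E0 ?K" "\<psi>2 \<in> Hc m E0 ?K" "L \<psi>1 = L \<psi>2"
    show "\<psi>1 = \<psi>2"
    proof (rule extensionalityI)
      show "\<psi>1 \<in> extensional ?VF" "\<psi>2 \<in> extensional ?VF" using a(1,2) unfolding Hc_def by (auto simp: PiE_def)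
      fix u assume u: "u \<in> ?VF"
      have "L \<psi>1 u = L \<psi>2 u" using a(3) by simp
      hence "embed e (\<psi>1 u) = embed e (\<psi>2 u)" using u unfolding L_def loc_def by simp
      thus "\<psi>1 u = \<psi>2 u" using embed_inj ne by blast
    qed
  qed
  have "?H = L ` Hc m E0 ?K" using sub1 sub2 by blast
  thus ?thesis using card_image[OF inj] by simp
qed

lemma Hc_pos: assumes i0: "i0 \<in> {1..s}" shows "0 < card (Hc m E0 (k i0))"
proof -
  let ?K = "k i0"
  let ?VF = "fst (Fdag m E0 ?K)"
  have "finite (?VF \<rightarrow>\<^sub>E ?VF)" by (intro finite_PiE Fdag_V_finite)
  hence fin: "finite (Hc m E0 ?K)" unfolding Hc_def by (rule finite_subset[rotated]) auto
  have "restrict id ?VF \<in> Hc m E0 ?K"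
  proof -
    have V: "FZ \<in> ?VF" "FW \<in> ?VF" unfolding Fdag_V by auto
    have Km: "?K \<le> m" using k_bounds[OF i0] by simp
    have "\<forall>(a, b)\<in>snd (Fdag m E0 ?K). dloc E0 ?K (restrict id ?VF a) (restrict id ?VF b)"
    proof clarify
      fix a b assume "(a, b) \<in> snd (Fdag m E0 ?K)"
      hence ab: "dfa m E0 ?K a b" by (simp add: Fdag_arc)
      thus "dloc E0 ?K (restrict id ?VF a) (restrict id ?VF b)"
        using dfa_V[OF ab Km E0_subset] dfa_dloc[OF ab] by simp
    qed
    thus ?thesis unfolding Hc_def using V by auto
  qed
  thus ?thesis using fin card_gt_0_iff by blast
qed

lemma T_finite: "finite (fst T)"
proof -
  have fa: "finite (arcsG n GE)"
    by (rule finite_subset[of _ "{1..n} \<times> {1..n}"]) (auto simp: arcsG_def)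
  have fV: "finite (Ti_V n GE m)" unfolding Ti_V_def nonroot_def using fa by auto
  have "fst T \<subseteq> {1..s} \<times> (\<Union>i\<in>{1..s}. {1..r i}) \<times> Ti_V n GE m"
    using Tstar_V by fastforce
  moreover have "finite ({1..s} \<times> (\<Union>i\<in>{1..s}. {1..r i}) \<times> Ti_V n GE m)"
    using fV by (intro finite_cartesian_product) auto
  ultimately show ?thesis by (rule finite_subset)
qed

lemma hom_sym: assumes i0: "i0 \<in> {1..s}"
  shows "hom_rooted (Fdag m E0 (k i0)) FZ FW T x y = hom_rooted (Fdag m E0 (k i0)) FZ FW T y x"
proof -
  have Km: "k i0 \<le> m" using k_bounds[OF i0] by simp
  show ?thesis unfolding hom_rooted_def
    using swap_card_le[OF T_finite Km E0_subset, of x y] swap_card_le[OF T_finite Km E0_subset, of y x]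
    by linarith
qed

lemma main_value:
  assumes i0: "i0 \<in> {1..s}" and x: "x \<in> fst T" and y: "y \<in> fst T"
  shows "hom_rooted (Fdag m E0 (k i0)) FZ FW T x y =
     (if \<exists>j\<in>{1..r i0}. \<exists>(p, q)\<in>arcsG n GE.
            (x, y) = ((i0, j, Rt p), (i0, j, Rt q)) \<or> (y, x) = ((i0, j, Rt p), (i0, j, Rt q))
      then card (Hc m E0 (k i0)) else 0)"
proof (cases "\<exists>j\<in>{1..r i0}. \<exists>(p, q)\<in>arcsG n GE.
            (x, y) = ((i0, j, Rt p), (i0, j, Rt q)) \<or> (y, x) = ((i0, j, Rt p), (i0, j, Rt q))")
  case True
  then obtain j p q where j: "j \<in> {1..r i0}" and e: "(p, q) \<in> arcsG n GE"
    and or: "(x, y) = ((i0, j, Rt p), (i0, j, Rt q)) \<or> (y, x) = ((i0, j, Rt p), (i0, j, Rt q))" by blast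
  have c: "hom_rooted (Fdag m E0 (k i0)) FZ FW T (i0, j, Rt p) (i0, j, Rt q) = card (Hc m E0 (k i0))"
    using count[OF i0 j e] unfolding hom_rooted_def by simp
  from or have "hom_rooted (Fdag m E0 (k i0)) FZ FW T x y = card (Hc m E0 (k i0))"
    using c hom_sym[OF i0] by auto
  thus ?thesis using True by simp
next
  case False
  have "{\<phi> \<in> hom_maps (Fdag m E0 (k i0)) T. \<phi> FZ = x \<and> \<phi> FW = y} = {}"
  proof (rule ccontr)
    assume "\<not> ?thesis"
    then obtain \<phi> where \<phi>: "\<phi> \<in> hom_maps (Fdag m E0 (k i0)) T" "\<phi> FZ = x" "\<phi> FW = y" by auto
    obtain j e where "j \<in> {1..r i0}" "e \<in> arcsG n GE" and je:
      "(\<phi> FZ = (i0, j, Rt (fst e)) \<and> \<phi> FW = (i0, j, Rt (snd e))) \<or> (\<phi> FZ = (i0, j, Rt (snd e)) \<and> \<phi> FW = (i0, j, Rt (fst e)))"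
      using hom_struct[OF i0 \<phi>(1)] by blast
    have "\<exists>j\<in>{1..r i0}. \<exists>(p, q)\<in>arcsG n GE.
            (x, y) = ((i0, j, Rt p), (i0, j, Rt q)) \<or> (y, x) = ((i0, j, Rt p), (i0, j, Rt q))"
    proof -
      obtain p q where pq: "e = (p, q)" by fastforce
      show ?thesis
        apply (rule bexI[OF _ \<open>j \<in> {1..r i0}\<close>])
        apply (rule bexI[of _ "(p, q)"])
        using \<phi>(2,3) \<open>e \<in> arcsG n GE\<close> je pq by auto
    qed
    thus False using False by blast
  qed
  hence "hom_rooted (Fdag m E0 (k i0)) FZ FW T x y = 0" unfolding hom_rooted_def by (metis card.empty)
  thus ?thesis using False by (simp only: if_False)
qed

end

theorem lemma4p8:
  fixes s :: nat
  assumes "0 < s"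
  shows "\<exists>M. \<forall>m \<ge> M. \<forall>E0 k. is_F0 m E0 \<and> valid_ks s m k \<longrightarrow>
           (\<forall>n GE r. is_graph n GE \<and> (\<forall>i\<in>{1..s}. 0 < r i) \<longrightarrow>
             (let T = Tstar s r n GE m E0 k in
              \<forall>i\<in>{1..s}. \<exists>a::real. a > 0 \<and>
                (\<forall>x\<in>fst T. \<forall>y\<in>fst T.
                   t_rooted (Fdag m E0 (k i)) FZ FW T x y =
                     (if \<exists>j\<in>{1..r i}. \<exists>(p, q)\<in>arcsG n GE.
                            (x, y) = ((i, j, Rt p), (i, j, Rt q)) \<or>
                            (y, x) = ((i, j, Rt p), (i, j, Rt q))
                      then a else 0))))"
proof (intro exI[of _ 400] allI impI, elim conjE)
  fix m :: nat and E0 k n GE r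
  assume m: "400 \<le> m" and F0: "is_F0 m E0" and vk: "valid_ks s m k"
  interpret mainloc m E0 s r n GE k
    by unfold_locales (use m F0 vk in auto)
  show "let T = Tstar s r n GE m E0 k in
              \<forall>i\<in>{1..s}. \<exists>a::real. a > 0 \<and>
                (\<forall>x\<in>fst T. \<forall>y\<in>fst T.
                   t_rooted (Fdag m E0 (k i)) FZ FW T x y =
                     (if \<exists>j\<in>{1..r i}. \<exists>(p, q)\<in>arcsG n GE.
                            (x, y) = ((i, j, Rt p), (i, j, Rt q)) \<or>
                            (y, x) = ((i, j, Rt p), (i, j, Rt q))
                      then a else 0))"
    unfolding Let_def
  proof (intro ballI)
    fix i assume i: "i \<in> {1..s}"
    let ?F = "Fdag m E0 (k i)"
    let ?D = "real (card (fst T)) ^ (card (fst ?F) - 2)"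
    define a where "a = (if card (fst T) = 0 then 1 else real (card (Hc m E0 (k i))) / ?D)"
    have apos: "a > 0" using Hc_pos[OF i] unfolding a_def by auto
    show "\<exists>a::real. a > 0 \<and>
                (\<forall>x\<in>fst T. \<forall>y\<in>fst T.
                   t_rooted ?F FZ FW T x y =
                     (if \<exists>j\<in>{1..r i}. \<exists>(p, q)\<in>arcsG n GE.
                            (x, y) = ((i, j, Rt p), (i, j, Rt q)) \<or>
                            (y, x) = ((i, j, Rt p), (i, j, Rt q))
                      then a else 0))"
    proof (intro exI[of _ a] conjI ballI)
      show "a > 0" by (rule apos)
      fix x y assume x: "x \<in> fst T" and y: "y \<in> fst T"
      have "card (fst T) \<noteq> 0" using x T_finite by auto
      thus "t_rooted ?F FZ FW T x y =
                     (if \<exists>j\<in>{1..r i}. \<exists>(p, q)\<in>arcsG n GE.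
                            (x, y) = ((i, j, Rt p), (i, j, Rt q)) \<or>
                            (y, x) = ((i, j, Rt p), (i, j, Rt q))
                      then a else 0)"
        unfolding t_rooted_def main_value[OF i x y] a_def by simp
    qed
  qed
qed

end
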